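(* Assume the good gauge $b\equiv0$, $\beta_r\equiv0$. Then for every $f\in C^2(M)$ for which $g_f$ is Riemannian, \[ \frac{H_{f,r}}{\lambda_f}=\frac1{2\lambda_f^2}\Big(\mathrm{tr}_{\gamma_f}Q_r(d^Sf)+\partial_rf\,\mathrm{tr}_{\gamma_f}Q_t(d^Sf)-2\,\partial_rf\,\mathrm{div}_{\gamma_f}(\beta_f^T)\Big). \] If $f$ moreover solves the TMCF equation $\mathrm{div}_{\gamma_f}(\beta_f^T)+H_{f,r}\,\beta_f({\bf n}_f)-\frac12\mathrm{tr}_{\gamma_f}(\partial_t\gamma_f)=0$, then \[ \frac{H_{f,r}}{\lambda_f}=\frac1{2\lambda^2}\mathrm{tr}_{\gamma_f}Q_r(d^Sf). \]
   Context: Good-gauge setting: metric $\mathfrak g^{(4)}=-(N^2-|\beta^T|^2_\gamma)dt^2+2\beta^T\odot dt+\lambda^2dr^2+\gamma$ on $(\underline T,\infty)\times(r_0,\infty)\times S^2$, $\alpha:=N^2-|\beta^T|^2_\gamma$. $d^S$ is the exterior derivative along the spheres $S_r$, $\mathrm{div}_{\gamma_f}$ the divergence on $(S_r,\gamma_f)$. For a graph $M_f=\{t=f(r,p)\}$ with coefficients evaluated at $t=f$: $\beta_f^T=\beta^T-\alpha\,d^Sf$, $\beta_f=\beta-\alpha\,df$, $\gamma_f=\gamma+2\beta^T\odot d^Sf-\alpha(d^Sf)^2$, $b_f=\partial_rf\,\beta_f^T$, $\lambda_f^2=\lambda^2-(\alpha+|\beta_f^T|^2_{\gamma_f})(\partial_rf)^2$,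 $g_f=(\lambda_f^2+|b_f|^2_{\gamma_f})dr^2+2b_f\odot dr+\gamma_f$, ${\bf n}_f=\lambda_f^{-1}(\partial_r-b_f^{\sharp_{\gamma_f}})$, $H_{f,r}$ the mean curvature of $S_r$ in $(M_f,g_f)$, and $\partial_t\gamma_f$ the $t$-derivative at fixed $f$ of $\gamma+2\beta^T\odot d^Sf-\alpha(d^Sf)^2$. For a 1-form $\omega$ on $S_r$: $Q_r(\omega):=\partial_r\gamma+2\partial_r\beta^T\odot\omega-\partial_r\alpha\,\omega^2$, $Q_t(\omega):=\partial_t\gamma+2\partial_t\beta^T\odot\omega-\partial_t\alpha\,\omega^2$. *)

theory Defs
  imports "HOL-Analysis.Analysis"
begin

text \<open>Spacetime coordinates (t, r, y, z) where (y, z) are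
coordinates of a chart U of S^2. Tensors on the spheres are indexed by A, B in {0,1};
tensors on the slice M_f (coordinates r, y, z) by i, j in {0,1,2} (0 = r, 1 = y, 2 = z).\<close>

type_synonym sfield = "real \<Rightarrow> real \<Rightarrow> real \<Rightarrow> real \<Rightarrow> real"  (* t r y z *)
type_synonym mfield = "real \<Rightarrow> real \<Rightarrow> real \<Rightarrow> real"            (* r y z *)

fun Ck_on :: "nat \<Rightarrow> ('a::euclidean_space \<Rightarrow> real) \<Rightarrow> 'a set \<Rightarrow> bool" where
  "Ck_on 0 G S = continuous_on S G"
| "Ck_on (Suc k) G S = (G differentiable_on S \<and>
      (\<forall>i\<in>Basis. Ck_on k (\<lambda>x. frechet_derivative G (at x) i) S))"

definition smooth_on_set :: "('a::euclidean_space \<Rightarrow> real) \<Rightarrow> 'a set \<Rightarrow> bool" where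
  "smooth_on_set G S = (\<forall>k. Ck_on k G S)"

definition unc4 :: "sfield \<Rightarrow> real \<times> real \<times> real \<times> real \<Rightarrow> real" where
  "unc4 F = (\<lambda>(t, r, y, z). F t r y z)"

definition unc3 :: "mfield \<Rightarrow> real \<times> real \<times> real \<Rightarrow> real" where
  "unc3 F = (\<lambda>(r, y, z). F r y z)"

definition spacetime_dom :: "real \<Rightarrow> real \<Rightarrow> (real \<times> real) set \<Rightarrow> (real \<times> real \<times> real \<times> real) set" where
  "spacetime_dom T r0 U = {(t, r, y, z). T < t \<and> r0 < r \<and> (y, z) \<in> U}"

definition M_dom :: "real \<Rightarrow> (real \<times> real) set \<Rightarrow> (real \<times> real \<times> real) set" where
  "M_dom r0 U = {(r, y, z). r0 < r \<and> (y, z) \<in> U}"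

definition pt :: "sfield \<Rightarrow> sfield" where
  "pt F = (\<lambda>t r y z. deriv (\<lambda>s. F s r y z) t)"
definition pr :: "sfield \<Rightarrow> sfield" where
  "pr F = (\<lambda>t r y z. deriv (\<lambda>s. F t s y z) r)"

definition mr :: "mfield \<Rightarrow> mfield" where
  "mr F = (\<lambda>r y z. deriv (\<lambda>s. F s y z) r)"
definition mS :: "nat \<Rightarrow> mfield \<Rightarrow> mfield" where  (* d^S, sphere directions A = 0,1 *)
  "mS A F = (\<lambda>r y z. if A = 0 then deriv (\<lambda>s. F r s z) y else deriv (\<lambda>s. F r y s) z)"
definition m3 :: "nat \<Rightarrow> mfield \<Rightarrow> mfield" where
  "m3 i F = (if i = 0 then mr F else mS (i - 1) F)"

definition det2 :: "(nat \<Rightarrow> nat \<Rightarrow> real) \<Rightarrow> real" where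
  "det2 G = G 0 0 * G 1 1 - G 0 1 * G 1 0"
definition inv2 :: "(nat \<Rightarrow> nat \<Rightarrow> real) \<Rightarrow> nat \<Rightarrow> nat \<Rightarrow> real" where
  "inv2 G A B = (if A = 0 \<and> B = 0 then G 1 1 else if A = 1 \<and> B = 1 then G 0 0 else - G A B) / det2 G"
definition tr2 :: "(nat \<Rightarrow> nat \<Rightarrow> real) \<Rightarrow> (nat \<Rightarrow> nat \<Rightarrow> real) \<Rightarrow> real" where
  "tr2 G X = (\<Sum>A<2. \<Sum>B<2. inv2 G A B * X A B)"
definition sqn2 :: "(nat \<Rightarrow> nat \<Rightarrow> real) \<Rightarrow> (nat \<Rightarrow> real) \<Rightarrow> real" where
  "sqn2 G w = (\<Sum>A<2. \<Sum>B<2. inv2 G A B * w A * w B)"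
definition raise2 :: "(nat \<Rightarrow> nat \<Rightarrow> real) \<Rightarrow> (nat \<Rightarrow> real) \<Rightarrow> nat \<Rightarrow> real" where
  "raise2 G w A = (\<Sum>B<2. inv2 G A B * w B)"
definition posdef2 :: "(nat \<Rightarrow> nat \<Rightarrow> real) \<Rightarrow> bool" where
  "posdef2 G = (\<forall>v::nat \<Rightarrow> real. (v 0 \<noteq> 0 \<or> v 1 \<noteq> 0) \<longrightarrow> (\<Sum>A<2. \<Sum>B<2. G A B * v A * v B) > 0)"
definition posdef3 :: "(nat \<Rightarrow> nat \<Rightarrow> real) \<Rightarrow> bool" where
  "posdef3 G = (\<forall>v::nat \<Rightarrow> real. (\<exists>i<3. v i \<noteq> 0) \<longrightarrow> (\<Sum>i<3. \<Sum>j<3. G i j * v i * v j) > 0)"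

definition alpha :: "sfield \<Rightarrow> (nat \<Rightarrow> sfield) \<Rightarrow> (nat \<Rightarrow> nat \<Rightarrow> sfield) \<Rightarrow> sfield" where
  "alpha Nn bT gam = (\<lambda>t r y z. (Nn t r y z)^2 - sqn2 (\<lambda>A B. gam A B t r y z) (\<lambda>A. bT A t r y z))"

definition atf :: "mfield \<Rightarrow> sfield \<Rightarrow> mfield" where
  "atf f F = (\<lambda>r y z. F (f r y z) r y z)"

definition betafT :: "sfield \<Rightarrow> (nat \<Rightarrow> sfield) \<Rightarrow> (nat \<Rightarrow> nat \<Rightarrow> sfield) \<Rightarrow> mfield \<Rightarrow> nat \<Rightarrow> mfield" where
  "betafT Nn bT gam f A = (\<lambda>r y z. atf f (bT A) r y z - atf f (alpha Nn bT gam) r y z * mS A f r y z)"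

definition gamf :: "sfield \<Rightarrow> (nat \<Rightarrow> sfield) \<Rightarrow> (nat \<Rightarrow> nat \<Rightarrow> sfield) \<Rightarrow> mfield \<Rightarrow> nat \<Rightarrow> nat \<Rightarrow> mfield" where
  "gamf Nn bT gam f A B = (\<lambda>r y z. atf f (gam A B) r y z
      + atf f (bT A) r y z * mS B f r y z + atf f (bT B) r y z * mS A f r y z
      - atf f (alpha Nn bT gam) r y z * mS A f r y z * mS B f r y z)"

definition gamfp :: "sfield \<Rightarrow> (nat \<Rightarrow> sfield) \<Rightarrow> (nat \<Rightarrow> nat \<Rightarrow> sfield) \<Rightarrow> mfield \<Rightarrow> real \<Rightarrow> real \<Rightarrow> real \<Rightarrow> nat \<Rightarrow> nat \<Rightarrow> real" where
  "gamfp Nn bT gam f r y z = (\<lambda>A B. gamf Nn bT gam f A B r y z)"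

definition lamf2 :: "sfield \<Rightarrow> sfield \<Rightarrow> (nat \<Rightarrow> sfield) \<Rightarrow> (nat \<Rightarrow> nat \<Rightarrow> sfield) \<Rightarrow> mfield \<Rightarrow> mfield" where
  "lamf2 Nn lam bT gam f = (\<lambda>r y z. (atf f lam r y z)^2
      - (atf f (alpha Nn bT gam) r y z + sqn2 (gamfp Nn bT gam f r y z) (\<lambda>A. betafT Nn bT gam f A r y z))
        * (mr f r y z)^2)"

definition lamf :: "sfield \<Rightarrow> sfield \<Rightarrow> (nat \<Rightarrow> sfield) \<Rightarrow> (nat \<Rightarrow> nat \<Rightarrow> sfield) \<Rightarrow> mfield \<Rightarrow> mfield" where
  "lamf Nn lam bT gam f = (\<lambda>r y z. sqrt (lamf2 Nn lam bT gam f r y z))"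

definition bf :: "sfield \<Rightarrow> (nat \<Rightarrow> sfield) \<Rightarrow> (nat \<Rightarrow> nat \<Rightarrow> sfield) \<Rightarrow> mfield \<Rightarrow> nat \<Rightarrow> mfield" where
  "bf Nn bT gam f A = (\<lambda>r y z. mr f r y z * betafT Nn bT gam f A r y z)"

text \<open>The induced metric g_f on M_f in coordinates (r,y,z).\<close>
definition gf :: "sfield \<Rightarrow> sfield \<Rightarrow> (nat \<Rightarrow> sfield) \<Rightarrow> (nat \<Rightarrow> nat \<Rightarrow> sfield) \<Rightarrow> mfield \<Rightarrow> nat \<Rightarrow> nat \<Rightarrow> mfield" where
  "gf Nn lam bT gam f i j = (\<lambda>r y z.
     if i = 0 \<and> j = 0 then lamf2 Nn lam bT gam f r y z
                         + sqn2 (gamfp Nn bT gam f r y z) (\<lambda>A. bf Nn bT gam f A r y z)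
     else if i = 0 then bf Nn bT gam f (j - 1) r y z
     else if j = 0 then bf Nn bT gam f (i - 1) r y z
     else gamf Nn bT gam f (i - 1) (j - 1) r y z)"

text \<open>Unit normal n_f = lamf^-1 (d_r - b_f^sharp), components w.r.t. (d_r, d_y, d_z).\<close>
definition nf :: "sfield \<Rightarrow> sfield \<Rightarrow> (nat \<Rightarrow> sfield) \<Rightarrow> (nat \<Rightarrow> nat \<Rightarrow> sfield) \<Rightarrow> mfield \<Rightarrow> nat \<Rightarrow> mfield" where
  "nf Nn lam bT gam f i = (\<lambda>r y z.
     if i = 0 then 1 / lamf Nn lam bT gam f r y z
     else - raise2 (gamfp Nn bT gam f r y z) (\<lambda>A. bf Nn bT gam f A r y z) (i - 1)
          / lamf Nn lam bT gam f r y z)"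

text \<open>Christoffel symbols of the first kind of a 3-metric G in coordinates (r,y,z):
 Chr3 G k i j = g(nabla_i d_j, d_k).\<close>
definition Chr3 :: "(nat \<Rightarrow> nat \<Rightarrow> mfield) \<Rightarrow> nat \<Rightarrow> nat \<Rightarrow> nat \<Rightarrow> mfield" where
  "Chr3 G k i j = (\<lambda>r y z. (m3 i (G j k) r y z + m3 j (G i k) r y z - m3 k (G i j) r y z) / 2)"

text \<open>Second fundamental form of S_r in (M_f, g_f) w.r.t. n_f: II(d_A, d_B) = g_f(nabla_{d_A} n_f, d_B).\<close>
definition IIf :: "sfield \<Rightarrow> sfield \<Rightarrow> (nat \<Rightarrow> sfield) \<Rightarrow> (nat \<Rightarrow> nat \<Rightarrow> sfield) \<Rightarrow> mfield \<Rightarrow> nat \<Rightarrow> nat \<Rightarrow> mfield" where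
  "IIf Nn lam bT gam f A B = (\<lambda>r y z.
     (\<Sum>k<3. gf Nn lam bT gam f k (B + 1) r y z * m3 (A + 1) (nf Nn lam bT gam f k) r y z)
   + (\<Sum>j<3. Chr3 (gf Nn lam bT gam f) (B + 1) (A + 1) j r y z * nf Nn lam bT gam f j r y z))"

definition Hf :: "sfield \<Rightarrow> sfield \<Rightarrow> (nat \<Rightarrow> sfield) \<Rightarrow> (nat \<Rightarrow> nat \<Rightarrow> sfield) \<Rightarrow> mfield \<Rightarrow> mfield" where
  "Hf Nn lam bT gam f = (\<lambda>r y z. tr2 (gamfp Nn bT gam f r y z) (\<lambda>A B. IIf Nn lam bT gam f A B r y z))"

definition Chr2 :: "(nat \<Rightarrow> nat \<Rightarrow> mfield) \<Rightarrow> nat \<Rightarrow> nat \<Rightarrow> nat \<Rightarrow> mfield" where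
  "Chr2 G D A B = (\<lambda>r y z. (mS A (G B D) r y z + mS B (G A D) r y z - mS D (G A B) r y z) / 2)"

definition div2 :: "(nat \<Rightarrow> nat \<Rightarrow> mfield) \<Rightarrow> (nat \<Rightarrow> mfield) \<Rightarrow> mfield" where
  "div2 G w = (\<lambda>r y z. let Gp = (\<lambda>A B. G A B r y z) in
     \<Sum>A<2. \<Sum>B<2. inv2 Gp A B *
       (mS A (w B) r y z - (\<Sum>C<2. \<Sum>D<2. inv2 Gp C D * Chr2 G D A B r y z * w C r y z)))"

text \<open>Q_r(omega), Q_t(omega) evaluated at t = f, for omega given by its components at the point.\<close>
definition Qr :: "sfield \<Rightarrow> (nat \<Rightarrow> sfield) \<Rightarrow> (nat \<Rightarrow> nat \<Rightarrow> sfield) \<Rightarrow> mfield \<Rightarrow> real \<Rightarrow> real \<Rightarrow> real \<Rightarrow> (nat \<Rightarrow> real) \<Rightarrow> nat \<Rightarrow> nat \<Rightarrow> real" where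
  "Qr Nn bT gam f r y z w A B = atf f (pr (gam A B)) r y z
      + atf f (pr (bT A)) r y z * w B + atf f (pr (bT B)) r y z * w A
      - atf f (pr (alpha Nn bT gam)) r y z * w A * w B"

definition Qt :: "sfield \<Rightarrow> (nat \<Rightarrow> sfield) \<Rightarrow> (nat \<Rightarrow> nat \<Rightarrow> sfield) \<Rightarrow> mfield \<Rightarrow> real \<Rightarrow> real \<Rightarrow> real \<Rightarrow> (nat \<Rightarrow> real) \<Rightarrow> nat \<Rightarrow> nat \<Rightarrow> real" where
  "Qt Nn bT gam f r y z w A B = atf f (pt (gam A B)) r y z
      + atf f (pt (bT A)) r y z * w B + atf f (pt (bT B)) r y z * w A
      - atf f (pt (alpha Nn bT gam)) r y z * w A * w B"

definition dSf :: "mfield \<Rightarrow> real \<Rightarrow> real \<Rightarrow> real \<Rightarrow> nat \<Rightarrow> real" where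
  "dSf f r y z = (\<lambda>A. mS A f r y z)"

text \<open>partial_t gamma_f: t-derivative at fixed f of gamma + 2 beta^T (.) d^S f - alpha (d^S f)^2, at t = f.\<close>
definition dtgamf :: "sfield \<Rightarrow> (nat \<Rightarrow> sfield) \<Rightarrow> (nat \<Rightarrow> nat \<Rightarrow> sfield) \<Rightarrow> mfield \<Rightarrow> nat \<Rightarrow> nat \<Rightarrow> mfield" where
  "dtgamf Nn bT gam f A B = (\<lambda>r y z. deriv (\<lambda>s. gam A B s r y z
      + bT A s r y z * mS B f r y z + bT B s r y z * mS A f r y z
      - alpha Nn bT gam s r y z * mS A f r y z * mS B f r y z) (f r y z))"

text \<open>beta_f(n_f), with beta_f = beta - alpha df and beta = beta^T (beta_r = 0).\<close>
definition betaf_n :: "sfield \<Rightarrow> sfield \<Rightarrow> (nat \<Rightarrow> sfield) \<Rightarrow> (nat \<Rightarrow> nat \<Rightarrow> sfield) \<Rightarrow> mfield \<Rightarrow> mfield" where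
  "betaf_n Nn lam bT gam f = (\<lambda>r y z.
      (- atf f (alpha Nn bT gam) r y z * mr f r y z) * nf Nn lam bT gam f 0 r y z
    + (\<Sum>A<2. betafT Nn bT gam f A r y z * nf Nn lam bT gam f (A + 1) r y z))"

definition TMCF_at :: "sfield \<Rightarrow> sfield \<Rightarrow> (nat \<Rightarrow> sfield) \<Rightarrow> (nat \<Rightarrow> nat \<Rightarrow> sfield) \<Rightarrow> mfield \<Rightarrow> real \<Rightarrow> real \<Rightarrow> real \<Rightarrow> bool" where
  "TMCF_at Nn lam bT gam f r y z =
     (div2 (gamf Nn bT gam f) (betafT Nn bT gam f) r y z
      + Hf Nn lam bT gam f r y z * betaf_n Nn lam bT gam f r y z
      - tr2 (gamfp Nn bT gam f r y z) (\<lambda>A B. dtgamf Nn bT gam f A B r y z) / 2 = 0)"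

end

theory Submission
  imports Defs
begin

definition e3 :: "nat \<Rightarrow> real \<times> real \<times> real" where
  "e3 i = (if i = 0 then (1,0,0) else if i = 1 then (0,1,0) else (0,0,1))"
definition emb :: "nat \<Rightarrow> real \<Rightarrow> real \<Rightarrow> real \<Rightarrow> real \<Rightarrow> real \<times> real \<times> real" where
  "emb i r y z = (if i = 0 then (\<lambda>s. (s,y,z)) else if i = 1 then (\<lambda>s. (r,s,z)) else (\<lambda>s. (r,y,s)))"
definition co :: "nat \<Rightarrow> real \<Rightarrow> real \<Rightarrow> real \<Rightarrow> real" where
  "co i r y z = (if i = 0 then r else if i = 1 then y else z)"

definition Dp :: "mfield \<Rightarrow> real \<Rightarrow> real \<Rightarrow> real \<Rightarrow> bool" where
  "Dp F r y z = (unc3 F differentiable at (r,y,z))"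

lemma emb_co: "emb i r y z (co i r y z) = (r,y,z)"
  by (simp add: emb_def co_def)

lemma emb_deriv: "(emb i r y z has_derivative (\<lambda>h. h *\<^sub>R e3 i)) (at s)"
  unfolding emb_def e3_def
  by (auto intro!: derivative_eq_intros simp: zero_prod_def)

lemma m3_emb: "i < 3 \<Longrightarrow> m3 i F r y z = deriv (\<lambda>s. unc3 F (emb i r y z s)) (co i r y z)"
  by (auto simp: m3_def mr_def mS_def emb_def co_def unc3_def)

lemma slice_hasD:
  assumes "(unc3 F has_derivative D) (at (r,y,z))"
  shows "((\<lambda>s. unc3 F (emb i r y z s)) has_real_derivative D (e3 i)) (at (co i r y z))"
proof -
  have "((\<lambda>s. unc3 F (emb i r y z s)) has_derivative (\<lambda>h. D (h *\<^sub>R e3 i))) (at (co i r y z))"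
    using diff_chain_at[OF emb_deriv, of "unc3 F" D i r y z "co i r y z"] assms
    by (simp add: emb_co o_def)
  moreover have "(\<lambda>h. D (h *\<^sub>R e3 i)) = (\<lambda>h. D (e3 i) * h)"
    using has_derivative_bounded_linear[OF assms]
    by (auto simp: bounded_linear.linear linear_scale)
  ultimately show ?thesis by (simp add: has_field_derivative_def)
qed

lemma Dp_slice:
  assumes "Dp F r y z" "i < 3"
  shows "((\<lambda>s. unc3 F (emb i r y z s)) has_real_derivative m3 i F r y z) (at (co i r y z))"
proof -
  from assms(1) obtain D where D: "(unc3 F has_derivative D) (at (r,y,z))"
    unfolding Dp_def differentiable_def by blast
  have h: "((\<lambda>s. unc3 F (emb i r y z s)) has_real_derivative D (e3 i)) (at (co i r y z))"
    by (rule slice_hasD[OF D])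
  then show ?thesis using m3_emb[OF assms(2), of F] DERIV_imp_deriv[OF h] by simp
qed

lemma unc3_app: "unc3 F (emb i r y z s) = (if i = 0 then F s y z else if i = 1 then F r s z else F r y s)"
  by (simp add: unc3_def emb_def)

lemma unc3_co: "unc3 F (emb i r y z (co i r y z)) = F r y z"
  by (simp add: emb_co unc3_def)

lemma unc3_lam: "unc3 (\<lambda>r y z. H (F r y z) (G r y z)) = (\<lambda>x. H (unc3 F x) (unc3 G x))"
  by (auto simp: unc3_def)

lemma m3_mult:
  assumes "Dp F r y z" "Dp G r y z" "i < 3"
  shows "m3 i (\<lambda>r y z. F r y z * G r y z) r y z = m3 i F r y z * G r y z + F r y z * m3 i G r y z"
proof -
  have "((\<lambda>s. unc3 F (emb i r y z s) * unc3 G (emb i r y z s)) has_real_derivative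
      m3 i F r y z * G r y z + F r y z * m3 i G r y z) (at (co i r y z))"
    using DERIV_mult[OF Dp_slice[OF assms(1,3)] Dp_slice[OF assms(2,3)]]
    by (simp add: unc3_co mult.commute)
  moreover have "unc3 (\<lambda>r y z. F r y z * G r y z) = (\<lambda>x. unc3 F x * unc3 G x)"
    by (auto simp: unc3_def)
  ultimately show ?thesis using m3_emb[OF assms(3), of "\<lambda>r y z. F r y z * G r y z"] DERIV_imp_deriv by simp
qed


lemma m3_add:
  assumes "Dp F r y z" "Dp G r y z" "i < 3"
  shows "m3 i (\<lambda>r y z. F r y z + G r y z) r y z = m3 i F r y z + m3 i G r y z"
proof -
  have "((\<lambda>s. unc3 F (emb i r y z s) + unc3 G (emb i r y z s)) has_real_derivative
      m3 i F r y z + m3 i G r y z) (at (co i r y z))"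
    using DERIV_add[OF Dp_slice[OF assms(1,3)] Dp_slice[OF assms(2,3)]] by simp
  moreover have "unc3 (\<lambda>r y z. F r y z + G r y z) = (\<lambda>x. unc3 F x + unc3 G x)"
    by (auto simp: unc3_def)
  ultimately show ?thesis using m3_emb[OF assms(3), of "\<lambda>r y z. F r y z + G r y z"] DERIV_imp_deriv by simp
qed

lemma m3_diff:
  assumes "Dp F r y z" "Dp G r y z" "i < 3"
  shows "m3 i (\<lambda>r y z. F r y z - G r y z) r y z = m3 i F r y z - m3 i G r y z"
proof -
  have "((\<lambda>s. unc3 F (emb i r y z s) - unc3 G (emb i r y z s)) has_real_derivative
      m3 i F r y z - m3 i G r y z) (at (co i r y z))"
    using DERIV_diff[OF Dp_slice[OF assms(1,3)] Dp_slice[OF assms(2,3)]] by simp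
  moreover have "unc3 (\<lambda>r y z. F r y z - G r y z) = (\<lambda>x. unc3 F x - unc3 G x)"
    by (auto simp: unc3_def)
  ultimately show ?thesis using m3_emb[OF assms(3), of "\<lambda>r y z. F r y z - G r y z"] DERIV_imp_deriv by simp
qed

lemma m3_sum:
  assumes "finite K" "\<And>k. k \<in> K \<Longrightarrow> Dp (F k) r y z" "i < 3"
  shows "m3 i (\<lambda>r y z. \<Sum>k\<in>K. F k r y z) r y z = (\<Sum>k\<in>K. m3 i (F k) r y z)"
proof -
  have "((\<lambda>s. \<Sum>k\<in>K. unc3 (F k) (emb i r y z s)) has_real_derivative
      (\<Sum>k\<in>K. m3 i (F k) r y z)) (at (co i r y z))"
    by (rule DERIV_sum) (use Dp_slice[OF assms(2) assms(3)] in auto)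
  moreover have "unc3 (\<lambda>r y z. \<Sum>k\<in>K. F k r y z) = (\<lambda>x. \<Sum>k\<in>K. unc3 (F k) x)"
    by (auto simp: unc3_def)
  ultimately show ?thesis using m3_emb[OF assms(3), of "\<lambda>r y z. \<Sum>k\<in>K. F k r y z"] DERIV_imp_deriv by simp
qed

lemma Dp_add: "Dp F r y z \<Longrightarrow> Dp G r y z \<Longrightarrow> Dp (\<lambda>r y z. F r y z + G r y z) r y z"
proof -
  assume a: "Dp F r y z" "Dp G r y z"
  have "unc3 (\<lambda>r y z. F r y z + G r y z) = (\<lambda>x. unc3 F x + unc3 G x)"
    by (auto simp: unc3_def)
  then show ?thesis using a by (simp add: Dp_def)
qed

lemma Dp_diff: "Dp F r y z \<Longrightarrow> Dp G r y z \<Longrightarrow> Dp (\<lambda>r y z. F r y z - G r y z) r y z"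
proof -
  assume a: "Dp F r y z" "Dp G r y z"
  have "unc3 (\<lambda>r y z. F r y z - G r y z) = (\<lambda>x. unc3 F x - unc3 G x)"
    by (auto simp: unc3_def)
  then show ?thesis using a by (simp add: Dp_def)
qed

lemma Dp_mult: "Dp F r y z \<Longrightarrow> Dp G r y z \<Longrightarrow> Dp (\<lambda>r y z. F r y z * G r y z) r y z"
proof -
  assume a: "Dp F r y z" "Dp G r y z"
  have "unc3 (\<lambda>r y z. F r y z * G r y z) = (\<lambda>x. unc3 F x * unc3 G x)"
    by (auto simp: unc3_def)
  then show ?thesis using a by (simp add: Dp_def)
qed

lemma Dp_div: "Dp F r y z \<Longrightarrow> Dp G r y z \<Longrightarrow> G r y z \<noteq> 0 \<Longrightarrow> Dp (\<lambda>r y z. F r y z / G r y z) r y z"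
proof -
  assume a: "Dp F r y z" "Dp G r y z" "G r y z \<noteq> 0"
  have "unc3 (\<lambda>r y z. F r y z / G r y z) = (\<lambda>x. unc3 F x / unc3 G x)"
    by (auto simp: unc3_def)
  then show ?thesis using a by (simp add: Dp_def unc3_def)
qed

lemma Dp_minus: "Dp F r y z \<Longrightarrow> Dp (\<lambda>r y z. - F r y z) r y z"
proof -
  assume a: "Dp F r y z"
  have "unc3 (\<lambda>r y z. - F r y z) = (\<lambda>x. - unc3 F x)"
    by (auto simp: unc3_def)
  then show ?thesis using a by (simp add: Dp_def)
qed

lemma Dp_const: "Dp (\<lambda>r y z. c) r y z"
proof -
  have "unc3 (\<lambda>r y z. c) = (\<lambda>x. c)"
    by (auto simp: unc3_def)
  then show ?thesis by (simp add: Dp_def)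
qed

lemma Dp_pow: "Dp F r y z \<Longrightarrow> Dp (\<lambda>r y z. F r y z ^ n) r y z"
proof -
  assume a: "Dp F r y z"
  have "unc3 (\<lambda>r y z. F r y z ^ n) = (\<lambda>x. unc3 F x ^ n)"
    by (auto simp: unc3_def)
  then show ?thesis using a by (simp add: Dp_def)
qed

lemma Dp_sqrt: "Dp F r y z \<Longrightarrow> F r y z > 0 \<Longrightarrow> Dp (\<lambda>r y z. sqrt (F r y z)) r y z"
proof -
  assume a: "Dp F r y z" "F r y z > 0"
  have "unc3 (\<lambda>r y z. sqrt (F r y z)) = (\<lambda>x. sqrt (unc3 F x))"
    by (auto simp: unc3_def)
  moreover have "sqrt differentiable at (unc3 F (r,y,z))"
    using DERIV_real_sqrt[of "F r y z"] a(2) unfolding has_field_derivative_def differentiable_def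
    by (auto simp: unc3_def)
  ultimately show ?thesis using a(1) differentiable_compose[of sqrt "unc3 F" "(r,y,z)"]
    by (simp add: Dp_def)
qed

lemma Dp_sum: "finite K \<Longrightarrow> (\<And>k. k \<in> K \<Longrightarrow> Dp (F k) r y z) \<Longrightarrow> Dp (\<lambda>r y z. \<Sum>k\<in>K. F k r y z) r y z"
proof -
  assume a: "finite K" "\<And>k. k \<in> K \<Longrightarrow> Dp (F k) r y z"
  have "unc3 (\<lambda>r y z. \<Sum>k\<in>K. F k r y z) = (\<lambda>x. \<Sum>k\<in>K. unc3 (F k) x)"
    by (auto simp: unc3_def)
  then show ?thesis using a by (simp add: Dp_def)
qed

lemma m3_zero_near:
  assumes "open S" "(r,y,z) \<in> S" "\<And>x. x \<in> S \<Longrightarrow> unc3 H x = 0" "i < 3"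
  shows "m3 i H r y z = 0"
proof -
  have "continuous_on UNIV (emb i r y z)"
    unfolding emb_def by (auto intro!: continuous_intros)
  then have o: "open (emb i r y z -` S)"
    using assms(1) open_vimage by blast
  have "co i r y z \<in> emb i r y z -` S" using assms(2) by (simp add: emb_co)
  then have ev: "eventually (\<lambda>s. unc3 H (emb i r y z s) = 0) (nhds (co i r y z))"
    using o assms(3) eventually_nhds by blast
  have "m3 i H r y z = deriv (\<lambda>s. unc3 H (emb i r y z s)) (co i r y z)"
    by (rule m3_emb[OF assms(4)])
  also have "\<dots> = deriv (\<lambda>s. 0) (co i r y z)"
    by (rule deriv_cong_ev[OF ev refl])
  also have "\<dots> = 0" by simp
  finally show ?thesis .
qed

definition D4 :: "sfield \<Rightarrow> real \<Rightarrow> real \<Rightarrow> real \<Rightarrow> real \<Rightarrow> bool" where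
  "D4 X t r y z = (unc4 X differentiable at (t,r,y,z))"

lemma Dp_atf:
  assumes "D4 X (f r y z) r y z" "Dp f r y z"
  shows "Dp (atf f X) r y z"
proof -
  have e: "unc3 (atf f X) = (\<lambda>x. unc4 X (unc3 f x, x))"
    by (auto simp: unc3_def unc4_def atf_def)
  have "(\<lambda>x. (unc3 f x, x)) differentiable at (r,y,z)"
  proof -
    obtain Df where "(unc3 f has_derivative Df) (at (r,y,z))"
      using assms(2) unfolding Dp_def differentiable_def by blast
    from has_derivative_Pair[OF this has_derivative_ident] show ?thesis
      unfolding differentiable_def by blast
  qed
  moreover have "unc4 X differentiable at (unc3 f (r,y,z), (r,y,z))"
    using assms(1) by (simp add: D4_def unc3_def)
  ultimately show ?thesis unfolding Dp_def e
    using differentiable_compose[of "unc4 X" "\<lambda>x. (unc3 f x, x)"] by blast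
qed

lemma mr_atf:
  assumes "D4 X (f r y z) r y z" "Dp f r y z"
  shows "mr (atf f X) r y z = pt X (f r y z) r y z * mr f r y z + pr X (f r y z) r y z"
proof -
  obtain D where D: "(unc4 X has_derivative D) (at (f r y z, r, y, z))"
    using assms(1) unfolding D4_def differentiable_def by blast
  have lin: "linear D" using has_derivative_linear[OF D] .
  have fs: "((\<lambda>s. f s y z) has_real_derivative mr f r y z) (at r)"
    using Dp_slice[OF assms(2), of 0] by (simp add: unc3_app co_def m3_def)
  have c1: "((\<lambda>s. (f s y z, s, y, z)) has_derivative (\<lambda>h. (h * mr f r y z, h, 0, 0))) (at r)"
    using fs unfolding has_field_derivative_def
    by (auto intro!: derivative_eq_intros simp: mult.commute zero_prod_def)
  have "((\<lambda>s. unc4 X (f s y z, s, y, z)) has_derivative (\<lambda>h. D (h * mr f r y z, h, 0, 0))) (at r)"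
    using diff_chain_at[OF c1, of "unc4 X" D] D by (simp add: o_def)
  moreover have "(\<lambda>h. D (h * mr f r y z, h, 0, 0)) = (\<lambda>h. (mr f r y z * D (1,0,0,0) + D (0,1,0,0)) * h)"
  proof
    fix h
    have "D (h * mr f r y z, h, 0, 0) = D ((h * mr f r y z) *\<^sub>R (1,0,0,0) + h *\<^sub>R (0,1,0,0))"
      by simp
    also have "\<dots> = (h * mr f r y z) * D (1,0,0,0) + h * D (0,1,0,0)"
      by (simp only: linear_add[OF lin] linear_cmul[OF lin] real_scaleR_def)
    finally show "D (h * mr f r y z, h, 0, 0) = (mr f r y z * D (1,0,0,0) + D (0,1,0,0)) * h"
      by (simp add: algebra_simps)
  qed
  ultimately have h1: "((\<lambda>s. atf f X s y z) has_real_derivative (mr f r y z * D (1,0,0,0) + D (0,1,0,0))) (at r)"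
    by (simp add: has_field_derivative_def atf_def unc4_def)
  have c2: "((\<lambda>s. (s, r, y, z)) has_derivative (\<lambda>h. (h, 0, 0, 0))) (at (f r y z))"
    by (auto intro!: derivative_eq_intros simp: zero_prod_def)
  have "((\<lambda>s. unc4 X (s, r, y, z)) has_derivative (\<lambda>h. D (h, 0, 0, 0))) (at (f r y z))"
    using diff_chain_at[OF c2, of "unc4 X" D] D by (simp add: o_def)
  moreover have "(\<lambda>h. D (h, 0, 0, 0)) = (\<lambda>h. D (1,0,0,0) * h)"
  proof
    fix h
    have "D (h, 0, 0, 0) = D (h *\<^sub>R (1,0,0,0))" by simp
    also have "\<dots> = h * D (1,0,0,0)" by (simp only: linear_cmul[OF lin] real_scaleR_def)
    finally show "D (h, 0, 0, 0) = D (1,0,0,0) * h" by (simp add: mult.commute)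
  qed
  ultimately have h2: "((\<lambda>s. X s r y z) has_real_derivative D (1,0,0,0)) (at (f r y z))"
    by (simp add: has_field_derivative_def unc4_def)
  have c3: "((\<lambda>s. (f r y z, s, y, z)) has_derivative (\<lambda>h. (0, h, 0, 0))) (at r)"
    by (auto intro!: derivative_eq_intros simp: zero_prod_def)
  have "((\<lambda>s. unc4 X (f r y z, s, y, z)) has_derivative (\<lambda>h. D (0, h, 0, 0))) (at r)"
    using diff_chain_at[OF c3, of "unc4 X" D] D by (simp add: o_def)
  moreover have "(\<lambda>h. D (0, h, 0, 0)) = (\<lambda>h. D (0,1,0,0) * h)"
  proof
    fix h
    have "D (0, h, 0, 0) = D (h *\<^sub>R (0,1,0,0))" by simp
    also have "\<dots> = h * D (0,1,0,0)" by (simp only: linear_cmul[OF lin] real_scaleR_def)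
    finally show "D (0, h, 0, 0) = D (0,1,0,0) * h" by (simp add: mult.commute)
  qed
  ultimately have h3: "((\<lambda>s. X (f r y z) s y z) has_real_derivative D (0,1,0,0)) (at r)"
    by (simp add: has_field_derivative_def unc4_def)
  show ?thesis
    using DERIV_imp_deriv[OF h1] DERIV_imp_deriv[OF h2] DERIV_imp_deriv[OF h3]
    by (simp add: mr_def pt_def pr_def mult.commute)
qed

lemma pt_hasD:
  assumes "D4 X t r y z"
  shows "((\<lambda>s. X s r y z) has_real_derivative pt X t r y z) (at t)"
proof -
  obtain D where D: "(unc4 X has_derivative D) (at (t, r, y, z))"
    using assms(1) unfolding D4_def differentiable_def by blast
  have lin: "linear D" using has_derivative_linear[OF D] .
  have c2: "((\<lambda>s. (s, r, y, z)) has_derivative (\<lambda>h. (h, 0, 0, 0))) (at t)"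
    by (auto intro!: derivative_eq_intros simp: zero_prod_def)
  have "((\<lambda>s. unc4 X (s, r, y, z)) has_derivative (\<lambda>h. D (h, 0, 0, 0))) (at t)"
    using diff_chain_at[OF c2, of "unc4 X" D] D by (simp add: o_def)
  moreover have "(\<lambda>h. D (h, 0, 0, 0)) = (\<lambda>h. D (1,0,0,0) * h)"
  proof
    fix h
    have "D (h, 0, 0, 0) = D (h *\<^sub>R (1,0,0,0))" by simp
    also have "\<dots> = h * D (1,0,0,0)" by (simp only: linear_cmul[OF lin] real_scaleR_def)
    finally show "D (h, 0, 0, 0) = D (1,0,0,0) * h" by (simp add: mult.commute)
  qed
  ultimately have h2: "((\<lambda>s. X s r y z) has_real_derivative D (1,0,0,0)) (at t)"
    by (simp add: has_field_derivative_def unc4_def)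
  then show ?thesis using DERIV_imp_deriv[OF h2] by (simp add: pt_def)
qed

lemma clairaut:
  fixes g ga gb gab gba :: "real \<Rightarrow> real \<Rightarrow> real"
  assumes d0: "d0 > 0"
    and ha: "\<And>r s. \<bar>r - r0\<bar> < d0 \<Longrightarrow> \<bar>s - s0\<bar> < d0 \<Longrightarrow> ((\<lambda>r. g r s) has_real_derivative ga r s) (at r)"
    and hb: "\<And>r s. \<bar>r - r0\<bar> < d0 \<Longrightarrow> \<bar>s - s0\<bar> < d0 \<Longrightarrow> ((\<lambda>s. g r s) has_real_derivative gb r s) (at s)"
    and hab: "\<And>r s. \<bar>r - r0\<bar> < d0 \<Longrightarrow> \<bar>s - s0\<bar> < d0 \<Longrightarrow> ((\<lambda>s. ga r s) has_real_derivative gab r s) (at s)"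
    and hba: "\<And>r s. \<bar>r - r0\<bar> < d0 \<Longrightarrow> \<bar>s - s0\<bar> < d0 \<Longrightarrow> ((\<lambda>r. gb r s) has_real_derivative gba r s) (at r)"
    and cab: "\<And>e. e > 0 \<Longrightarrow> \<exists>d>0. \<forall>r s. \<bar>r - r0\<bar> < d \<longrightarrow> \<bar>s - s0\<bar> < d \<longrightarrow> \<bar>gab r s - gab r0 s0\<bar> < e"
    and cba: "\<And>e. e > 0 \<Longrightarrow> \<exists>d>0. \<forall>r s. \<bar>r - r0\<bar> < d \<longrightarrow> \<bar>s - s0\<bar> < d \<longrightarrow> \<bar>gba r s - gba r0 s0\<bar> < e"
  shows "gab r0 s0 = gba r0 s0"
proof (rule ccontr)
  assume ne: "gab r0 s0 \<noteq> gba r0 s0"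
  define e where "e = \<bar>gab r0 s0 - gba r0 s0\<bar> / 2"
  have e: "e > 0" using ne by (simp add: e_def)
  obtain d1 where d1: "d1 > 0" "\<forall>r s. \<bar>r - r0\<bar> < d1 \<longrightarrow> \<bar>s - s0\<bar> < d1 \<longrightarrow> \<bar>gab r s - gab r0 s0\<bar> < e"
    using cab[OF e] by blast
  obtain d2 where d2: "d2 > 0" "\<forall>r s. \<bar>r - r0\<bar> < d2 \<longrightarrow> \<bar>s - s0\<bar> < d2 \<longrightarrow> \<bar>gba r s - gba r0 s0\<bar> < e"
    using cba[OF e] by blast
  define h where "h = min (min d0 d1) d2 / 2"
  have h: "h > 0" "h < d0" "h < d1" "h < d2" using d0 d1 d2 by (auto simp: h_def)
  define Del where "Del = g (r0+h) (s0+h) - g (r0+h) s0 - g r0 (s0+h) + g r0 s0"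
  obtain \<xi> where xi: "r0 < \<xi>" "\<xi> < r0 + h"
    "(g (r0+h) (s0+h) - g (r0+h) s0) - (g r0 (s0+h) - g r0 s0) = h * (ga \<xi> (s0+h) - ga \<xi> s0)"
  proof -
    have "\<exists>z. r0 < z \<and> z < r0 + h \<and> (g (r0+h) (s0+h) - g (r0+h) s0) - (g r0 (s0+h) - g r0 s0) = (r0 + h - r0) * (ga z (s0+h) - ga z s0)"
      apply (rule MVT2[where f = "\<lambda>r. g r (s0+h) - g r s0"])
      using h by (auto intro!: DERIV_diff ha)
    then show ?thesis using that by auto
  qed
  obtain \<eta> where eta: "s0 < \<eta>" "\<eta> < s0 + h" "ga \<xi> (s0+h) - ga \<xi> s0 = h * gab \<xi> \<eta>"
  proof -
    have "\<exists>z. s0 < z \<and> z < s0 + h \<and> ga \<xi> (s0+h) - ga \<xi> s0 = (s0 + h - s0) * gab \<xi> z"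
      apply (rule MVT2[where f = "\<lambda>s. ga \<xi> s"])
      using h xi by (auto intro!: hab)
    then show ?thesis using that by auto
  qed
  obtain \<eta>' where eta': "s0 < \<eta>'" "\<eta>' < s0 + h"
    "(g (r0+h) (s0+h) - g r0 (s0+h)) - (g (r0+h) s0 - g r0 s0) = h * (gb (r0+h) \<eta>' - gb r0 \<eta>')"
  proof -
    have "\<exists>z. s0 < z \<and> z < s0 + h \<and> (g (r0+h) (s0+h) - g r0 (s0+h)) - (g (r0+h) s0 - g r0 s0) = (s0 + h - s0) * (gb (r0+h) z - gb r0 z)"
      apply (rule MVT2[where f = "\<lambda>s. g (r0+h) s - g r0 s"])
      using h by (auto intro!: DERIV_diff hb)
    then show ?thesis using that by auto
  qed
  obtain \<xi>' where xi': "r0 < \<xi>'" "\<xi>' < r0 + h" "gb (r0+h) \<eta>' - gb r0 \<eta>' = h * gba \<xi>' \<eta>'"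
  proof -
    have "\<exists>z. r0 < z \<and> z < r0 + h \<and> gb (r0+h) \<eta>' - gb r0 \<eta>' = (r0 + h - r0) * gba z \<eta>'"
      apply (rule MVT2[where f = "\<lambda>r. gb r \<eta>'"])
      using h eta' by (auto intro!: hba)
    then show ?thesis using that by auto
  qed
  have "h * (h * gab \<xi> \<eta>) = h * (h * gba \<xi>' \<eta>')"
    using xi(3) eta(3) eta'(3) xi'(3) by (simp add: algebra_simps)
  then have eq: "gab \<xi> \<eta> = gba \<xi>' \<eta>'" using h(1) by simp
  have a1: "\<bar>gab \<xi> \<eta> - gab r0 s0\<bar> < e" using d1(2) xi eta h by auto
  have a2: "\<bar>gba \<xi>' \<eta>' - gba r0 s0\<bar> < e" using d2(2) xi' eta' h by auto
  from a1 a2 eq have "\<bar>gab r0 s0 - gba r0 s0\<bar> < 2 * e" by linarith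
  then show False by (simp add: e_def)
qed

lemma e3_Basis: "i < 3 \<Longrightarrow> e3 i \<in> Basis"
  by (auto simp: e3_def Basis_prod_def zero_prod_def numeral_3_eq_3 less_Suc_eq)

lemma m3_FD:
  assumes "Dp F r y z" "i < 3"
  shows "m3 i F r y z = frechet_derivative (unc3 F) (at (r,y,z)) (e3 i)"
proof -
  have "(unc3 F has_derivative frechet_derivative (unc3 F) (at (r,y,z))) (at (r,y,z))"
    using assms(1) frechet_derivative_works unfolding Dp_def by blast
  from slice_hasD[OF this, of i] Dp_slice[OF assms] show ?thesis
    using DERIV_unique by blast
qed

lemma diff_transfer:
  assumes "open S" "x \<in> S" "g differentiable at x" "\<And>x. x \<in> S \<Longrightarrow> h x = g x"
  shows "h differentiable at x"
proof -
  obtain D where D: "(g has_derivative D) (at x)" using assms(3) unfolding differentiable_def by blast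
  have "(h has_derivative D) (at x)"
    by (rule has_derivative_transform_within_open[OF D assms(1,2)]) (use assms(4) in auto)
  then show ?thesis unfolding differentiable_def by blast
qed

lemma Ck2_facts:
  assumes S: "open S" and C: "Ck_on 2 (unc3 f) S" and i: "i < 3" and j: "j < 3"
  shows "\<forall>x\<in>S. unc3 f differentiable at x"
    and "\<forall>x\<in>S. unc3 (m3 i f) differentiable at x"
    and "\<forall>x\<in>S. isCont (unc3 (m3 j (m3 i f))) x"
proof -
  have C2: "unc3 f differentiable_on S"
    "\<forall>b\<in>Basis. (\<lambda>x. frechet_derivative (unc3 f) (at x) b) differentiable_on S \<and>
       (\<forall>c\<in>Basis. continuous_on S (\<lambda>x. frechet_derivative (\<lambda>x. frechet_derivative (unc3 f) (at x) b) (at x) c))"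
    using C by (simp_all add: numeral_2_eq_2)
  show d0: "\<forall>x\<in>S. unc3 f differentiable at x"
    using C2(1) S differentiable_on_eq_differentiable_at by blast
  define P where "P = (\<lambda>x. frechet_derivative (unc3 f) (at x) (e3 i))"
  have eqP: "unc3 (m3 i f) x = P x" if "x \<in> S" for x
  proof -
    obtain r y z where x: "x = (r,y,z)" by (cases x) auto
    have "Dp f r y z" using d0 that x by (simp add: Dp_def)
    then show ?thesis using m3_FD[OF _ i] x by (simp add: P_def unc3_def)
  qed
  have Pd: "P differentiable_on S" "continuous_on S (\<lambda>x. frechet_derivative P (at x) (e3 j))"
    using C2(2) e3_Basis[OF i] e3_Basis[OF j] by (auto simp: P_def)
  show d1: "\<forall>x\<in>S. unc3 (m3 i f) differentiable at x"
  proof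
    fix x assume x: "x \<in> S"
    have "P differentiable at x" using Pd(1) S x differentiable_on_eq_differentiable_at by blast
    then show "unc3 (m3 i f) differentiable at x" using diff_transfer[OF S x] eqP by blast
  qed
  have eq2: "unc3 (m3 j (m3 i f)) x = frechet_derivative P (at x) (e3 j)" if "x \<in> S" for x
  proof -
    obtain r y z where x: "x = (r,y,z)" by (cases x) auto
    have "Dp (m3 i f) r y z" using d1 that x by (simp add: Dp_def)
    then have "m3 j (m3 i f) r y z = frechet_derivative (unc3 (m3 i f)) (at (r,y,z)) (e3 j)"
      using m3_FD[OF _ j] by blast
    also have "frechet_derivative (unc3 (m3 i f)) (at (r,y,z)) = frechet_derivative P (at (r,y,z))"
      by (rule frechet_derivative_transform_within_open[OF _ S]) (use d1 that x eqP in auto)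
    finally show ?thesis using x by (simp add: unc3_def)
  qed
  have "continuous_on S (unc3 (m3 j (m3 i f))) = continuous_on S (\<lambda>x. frechet_derivative P (at x) (e3 j))"
    by (rule continuous_on_cong[OF refl]) (rule eq2)
  then have "continuous_on S (unc3 (m3 j (m3 i f)))" using Pd(2) by simp
  then show "\<forall>x\<in>S. isCont (unc3 (m3 j (m3 i f))) x"
    using continuous_on_eq_continuous_at[OF S] by auto
qed

lemma dist3: "\<bar>a - a0\<bar> < d \<Longrightarrow> \<bar>b - b0\<bar> < d \<Longrightarrow> \<bar>c - c0\<bar> < d \<Longrightarrow> dist (a,b,c) (a0,b0,c0) < 3 * d"
proof -
  assume h: "\<bar>a - a0\<bar> < d" "\<bar>b - b0\<bar> < d" "\<bar>c - c0\<bar> < d"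
  have "dist (a,b,c) (a0,b0,c0) \<le> dist a a0 + dist (b,c) (b0,c0)"
    unfolding dist_Pair_Pair by (rule sqrt_sum_squares_le_sum_abs[THEN order_trans]) simp
  also have "dist (b,c) (b0,c0) \<le> dist b b0 + dist c c0"
    unfolding dist_Pair_Pair by (rule sqrt_sum_squares_le_sum_abs[THEN order_trans]) simp
  finally show ?thesis using h by (simp add: dist_real_def)
qed

lemma open_near:
  assumes "open S" "(r::real,y::real,z::real) \<in> S"
  shows "\<exists>d>0. \<forall>a b c. \<bar>a - r\<bar> < d \<longrightarrow> \<bar>b - y\<bar> < d \<longrightarrow> \<bar>c - z\<bar> < d \<longrightarrow> (a,b,c) \<in> S"
proof -
  obtain e where e: "e > 0" "ball (r,y,z) e \<subseteq> S" using assms open_contains_ball by blast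
  show ?thesis
  proof (intro exI[of _ "e/3"] conjI allI impI)
    fix a b c assume "\<bar>a - r\<bar> < e/3" "\<bar>b - y\<bar> < e/3" "\<bar>c - z\<bar> < e/3"
    then have "dist (a,b,c) (r,y,z) < 3 * (e/3)" by (rule dist3)
    then show "(a,b,c) \<in> S" using e by (auto simp: dist_commute)
  qed (use e in auto)
qed

lemma cont_near:
  assumes "isCont (unc3 H) (r,y,z)" "e > 0"
  shows "\<exists>d>0. \<forall>a b c. \<bar>a - r\<bar> < d \<longrightarrow> \<bar>b - y\<bar> < d \<longrightarrow> \<bar>c - z\<bar> < d \<longrightarrow> \<bar>H a b c - H r y z\<bar> < e"
proof -
  obtain d where d: "d > 0" "\<forall>x. dist x (r,y,z) < d \<longrightarrow> dist (unc3 H x) (unc3 H (r,y,z)) < e"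
    using assms continuous_at_eps_delta by blast
  show ?thesis
  proof (intro exI[of _ "d/3"] conjI allI impI)
    fix a b c assume "\<bar>a - r\<bar> < d/3" "\<bar>b - y\<bar> < d/3" "\<bar>c - z\<bar> < d/3"
    then have "dist (a,b,c) (r,y,z) < 3 * (d/3)" by (rule dist3)
    then show "\<bar>H a b c - H r y z\<bar> < e" using d by (auto simp: unc3_def dist_real_def)
  qed (use d in auto)
qed


lemma m3_simps: "m3 0 F = mr F" "m3 (Suc A) F = mS A F"
  by (simp_all add: m3_def)

lemma schwarz:
  assumes S: "open S" and C: "Ck_on 2 (unc3 f) S" and p: "(r,y,z) \<in> S" and A: "A < 2"
  shows "mS A (mr f) r y z = mr (mS A f) r y z"
proof -
  define j where "j = Suc A"
  have j: "j < 3" using A by (simp add: j_def)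
  have f0: "\<forall>x\<in>S. unc3 f differentiable at x" using Ck2_facts(1)[OF S C j j] .
  have f1: "\<forall>x\<in>S. unc3 (m3 0 f) differentiable at x" using Ck2_facts(2)[OF S C _ j, of 0] by simp
  have f2: "\<forall>x\<in>S. unc3 (m3 j f) differentiable at x" using Ck2_facts(2)[OF S C j j] .
  have c1: "isCont (unc3 (m3 j (m3 0 f))) (r,y,z)" using Ck2_facts(3)[OF S C _ j, of 0] p by simp
  have c2: "isCont (unc3 (m3 0 (m3 j f))) (r,y,z)" using Ck2_facts(3)[OF S C j, of 0] p by simp
  obtain d0 where d0: "d0 > 0" "\<forall>a b c. \<bar>a - r\<bar> < d0 \<longrightarrow> \<bar>b - y\<bar> < d0 \<longrightarrow> \<bar>c - z\<bar> < d0 \<longrightarrow> (a,b,c) \<in> S"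
    using open_near[OF S p] by blast
  have DpS: "Dp F a b c" if "(a,b,c) \<in> S" "\<forall>x\<in>S. unc3 F differentiable at x" for F a b c
    using that by (simp add: Dp_def)
  have "m3 j (m3 0 f) r y z = m3 0 (m3 j f) r y z"
  proof (cases "A = 0")
    case True
    then have jj: "j = 1" by (simp add: j_def)
    have inS: "(a,b,z) \<in> S" if "\<bar>a - r\<bar> < d0" "\<bar>b - y\<bar> < d0" for a b using d0 that by simp
    show ?thesis unfolding jj
    proof (rule clairaut[where g = "\<lambda>a b. f a b z" and ga = "\<lambda>a b. m3 0 f a b z" and gb = "\<lambda>a b. m3 1 f a b z"
          and gab = "\<lambda>a b. m3 1 (m3 0 f) a b z" and gba = "\<lambda>a b. m3 0 (m3 1 f) a b z", OF d0(1)])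
      fix a b assume h: "\<bar>a - r\<bar> < d0" "\<bar>b - y\<bar> < d0"
      note Sab = inS[OF h]
      show "((\<lambda>a. f a b z) has_real_derivative m3 0 f a b z) (at a)"
        using Dp_slice[OF DpS[OF Sab f0], of 0] by (simp add: unc3_app co_def)
      show "((\<lambda>s. f a s z) has_real_derivative m3 1 f a b z) (at b)"
        using Dp_slice[OF DpS[OF Sab f0], of 1] by (simp add: unc3_app co_def)
      show "((\<lambda>s. m3 0 f a s z) has_real_derivative m3 1 (m3 0 f) a b z) (at b)"
        using Dp_slice[OF DpS[OF Sab f1], of 1] by (simp add: unc3_app co_def)
      show "((\<lambda>r. m3 1 f r b z) has_real_derivative m3 0 (m3 1 f) a b z) (at a)"
        using Dp_slice[OF DpS[OF Sab f2[unfolded jj]], of 0] by (simp add: unc3_app co_def)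
    next
      fix e :: real assume e: "e > 0"
      obtain d where "d > 0" "\<forall>a b c. \<bar>a - r\<bar> < d \<longrightarrow> \<bar>b - y\<bar> < d \<longrightarrow> \<bar>c - z\<bar> < d \<longrightarrow> \<bar>m3 1 (m3 0 f) a b c - m3 1 (m3 0 f) r y z\<bar> < e"
        using cont_near[OF c1[unfolded jj] e] by blast
      then show "\<exists>d>0. \<forall>a b. \<bar>a - r\<bar> < d \<longrightarrow> \<bar>b - y\<bar> < d \<longrightarrow> \<bar>m3 1 (m3 0 f) a b z - m3 1 (m3 0 f) r y z\<bar> < e"
        by (intro exI[of _ d]) auto
    next
      fix e :: real assume e: "e > 0"
      obtain d where "d > 0" "\<forall>a b c. \<bar>a - r\<bar> < d \<longrightarrow> \<bar>b - y\<bar> < d \<longrightarrow> \<bar>c - z\<bar> < d \<longrightarrow> \<bar>m3 0 (m3 1 f) a b c - m3 0 (m3 1 f) r y z\<bar> < e"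
        using cont_near[OF c2[unfolded jj] e] by blast
      then show "\<exists>d>0. \<forall>a b. \<bar>a - r\<bar> < d \<longrightarrow> \<bar>b - y\<bar> < d \<longrightarrow> \<bar>m3 0 (m3 1 f) a b z - m3 0 (m3 1 f) r y z\<bar> < e"
        by (intro exI[of _ d]) auto
    qed
  next
    case False
    then have jj: "j = 2" using A by (simp add: j_def)
    have inS: "(a,y,b) \<in> S" if "\<bar>a - r\<bar> < d0" "\<bar>b - z\<bar> < d0" for a b using d0 that by simp
    show ?thesis unfolding jj
    proof (rule clairaut[where g = "\<lambda>a b. f a y b" and ga = "\<lambda>a b. m3 0 f a y b" and gb = "\<lambda>a b. m3 2 f a y b"
          and gab = "\<lambda>a b. m3 2 (m3 0 f) a y b" and gba = "\<lambda>a b. m3 0 (m3 2 f) a y b", OF d0(1)])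
      fix a b assume h: "\<bar>a - r\<bar> < d0" "\<bar>b - z\<bar> < d0"
      note Sab = inS[OF h]
      show "((\<lambda>a. f a y b) has_real_derivative m3 0 f a y b) (at a)"
        using Dp_slice[OF DpS[OF Sab f0], of 0] by (simp add: unc3_app co_def)
      show "((\<lambda>s. f a y s) has_real_derivative m3 2 f a y b) (at b)"
        using Dp_slice[OF DpS[OF Sab f0], of 2] by (simp add: unc3_app co_def)
      show "((\<lambda>s. m3 0 f a y s) has_real_derivative m3 2 (m3 0 f) a y b) (at b)"
        using Dp_slice[OF DpS[OF Sab f1], of 2] by (simp add: unc3_app co_def)
      show "((\<lambda>r. m3 2 f r y b) has_real_derivative m3 0 (m3 2 f) a y b) (at a)"
        using Dp_slice[OF DpS[OF Sab f2[unfolded jj]], of 0] by (simp add: unc3_app co_def)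
    next
      fix e :: real assume e: "e > 0"
      obtain d where "d > 0" "\<forall>a b c. \<bar>a - r\<bar> < d \<longrightarrow> \<bar>b - y\<bar> < d \<longrightarrow> \<bar>c - z\<bar> < d \<longrightarrow> \<bar>m3 2 (m3 0 f) a b c - m3 2 (m3 0 f) r y z\<bar> < e"
        using cont_near[OF c1[unfolded jj] e] by blast
      then show "\<exists>d>0. \<forall>a b. \<bar>a - r\<bar> < d \<longrightarrow> \<bar>b - z\<bar> < d \<longrightarrow> \<bar>m3 2 (m3 0 f) a y b - m3 2 (m3 0 f) r y z\<bar> < e"
        by (intro exI[of _ d]) auto
    next
      fix e :: real assume e: "e > 0"
      obtain d where "d > 0" "\<forall>a b c. \<bar>a - r\<bar> < d \<longrightarrow> \<bar>b - y\<bar> < d \<longrightarrow> \<bar>c - z\<bar> < d \<longrightarrow> \<bar>m3 0 (m3 2 f) a b c - m3 0 (m3 2 f) r y z\<bar> < e"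
        using cont_near[OF c2[unfolded jj] e] by blast
      then show "\<exists>d>0. \<forall>a b. \<bar>a - r\<bar> < d \<longrightarrow> \<bar>b - z\<bar> < d \<longrightarrow> \<bar>m3 0 (m3 2 f) a y b - m3 0 (m3 2 f) r y z\<bar> < e"
        by (intro exI[of _ d]) auto
    qed
  qed
  then show ?thesis by (simp add: j_def m3_simps)
qed

lemma sum2: "(\<Sum>A<(2::nat). F A) = F 0 + F 1"
  by (simp add: numeral_2_eq_2)
lemma sum3: "(\<Sum>A<(3::nat). F A) = F 0 + F 1 + F 2"
  by (simp add: numeral_3_eq_3 numeral_2_eq_2)

lemma posdef2_det:
  assumes sym: "G 0 1 = G 1 0" and pd: "posdef2 G"
  shows "det2 G > 0"
proof -
  have g00: "G 0 0 > 0"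
    using pd[unfolded posdef2_def, rule_format, of "\<lambda>k. if k = 0 then 1 else 0"] by (simp add: sum2)
  have "(\<Sum>A<2. \<Sum>B<2. G A B * (if A = 0 then - G 0 1 else G 0 0) * (if B = 0 then - G 0 1 else G 0 0)) > 0"
    using pd[unfolded posdef2_def, rule_format, of "\<lambda>k. if k = 0 then - G 0 1 else G 0 0"] g00 by simp
  then have "G 0 0 * (G 0 0 * G 1 1 - G 0 1 * G 1 0) > 0"
    using sym by (simp add: sum2 algebra_simps power2_eq_square)
  then show ?thesis using g00 by (simp add: det2_def zero_less_mult_iff)
qed

lemma inv_right:
  assumes sym: "G 0 1 = G 1 0" and det: "det2 G \<noteq> 0" and C: "C < 2" and B: "B < 2"
  shows "G C 0 * inv2 G 0 B + G C 1 * inv2 G 1 B = (if C = B then 1 else 0)"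
proof -
  define k where "k = 1 / det2 G"
  have k: "k * (G 0 0 * G 1 1 - G 1 0 * G 1 0) = 1" using det sym by (simp add: k_def det2_def)
  have inv: "inv2 G A D = (if A = 0 \<and> D = 0 then G 1 1 else if A = 1 \<and> D = 1 then G 0 0 else - G A D) * k" for A D
    by (simp add: inv2_def k_def)
  have "C = 0 \<or> C = 1" "B = 0 \<or> B = 1" using B C by auto
  then show ?thesis unfolding inv using k sym by (auto simp: algebra_simps)
qed

lemma inv_sym: "G 0 1 = G 1 0 \<Longrightarrow> inv2 G 0 1 = inv2 G 1 0"
  by (simp add: inv2_def)

lemma raise_inv:
  assumes sym: "G 0 1 = G 1 0" and det: "det2 G \<noteq> 0" and C: "C < 2"
  shows "G C 0 * raise2 G w 0 + G C 1 * raise2 G w 1 = w C"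
proof -
  have "G C 0 * raise2 G w 0 + G C 1 * raise2 G w 1
      = (G C 0 * inv2 G 0 0 + G C 1 * inv2 G 1 0) * w 0 + (G C 0 * inv2 G 0 1 + G C 1 * inv2 G 1 1) * w 1"
    by (simp add: raise2_def sum2 algebra_simps)
  also have "\<dots> = w C"
    using inv_right[OF sym det C, of 0] inv_right[OF sym det C, of 1] C by (auto simp: less_2_cases_iff)
  finally show ?thesis .
qed

lemma raise_cancel:
  assumes sym: "G 0 1 = G 1 0" and det: "det2 G \<noteq> 0" and B: "B < 2"
  shows "w B - (\<Sum>C<2. G C B * raise2 G w C) = 0"
proof -
  have "G 0 B = G B 0" "G 1 B = G B 1" using B sym by (auto simp: less_2_cases_iff)
  then show ?thesis using raise_inv[OF sym det B, of w] by (simp add: sum2)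
qed

lemma quad_form:
  assumes sym: "G 0 1 = G 1 0" and det: "det2 G \<noteq> 0"
    and M00: "M 0 0 = L2 + sqn2 G b"
    and M0S: "\<And>C. M 0 (Suc C) = b C" and MS0: "\<And>C. M (Suc C) 0 = b C"
    and MSS: "\<And>C D. M (Suc C) (Suc D) = G C D"
  shows "(\<Sum>i<3. \<Sum>j<3. M i j * (if i = 0 then 1 else - raise2 G b (i - 1)) * (if j = 0 then 1 else - raise2 G b (j - 1))) = L2"
proof -
  have e: "M 1 0 = b 0" "M 2 0 = b 1" "M 0 1 = b 0" "M 0 2 = b 1"
    "M 1 1 = G 0 0" "M 1 2 = G 0 1" "M 2 1 = G 1 0" "M 2 2 = G 1 1"
    using M0S[of 0] M0S[of 1] MS0[of 0] MS0[of 1] MSS[of 0 0] MSS[of 0 1] MSS[of 1 0] MSS[of 1 1]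
    by (simp_all add: numeral_2_eq_2)
  have sq: "sqn2 G b = b 0 * raise2 G b 0 + b 1 * raise2 G b 1"
    by (simp add: sqn2_def raise2_def sum2 algebra_simps)
  have r0: "G 0 0 * raise2 G b 0 + G 0 1 * raise2 G b 1 = b 0" using raise_inv[OF sym det, of 0] by simp
  have r1: "G 1 0 * raise2 G b 0 + G 1 1 * raise2 G b 1 = b 1" using raise_inv[OF sym det, of 1] by simp
  define x0 where "x0 = raise2 G b 0"
  define x1 where "x1 = raise2 G b 1"
  have "(\<Sum>i<3. \<Sum>j<3. M i j * (if i = 0 then 1 else - raise2 G b (i - 1)) * (if j = 0 then 1 else - raise2 G b (j - 1)))
     = M 0 0 - 2 * (b 0 * x0 + b 1 * x1) + x0 * (G 0 0 * x0 + G 0 1 * x1) + x1 * (G 1 0 * x0 + G 1 1 * x1)"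
    by (simp add: sum3 M0S MS0 MSS numeral_2_eq_2 One_nat_def x0_def x1_def algebra_simps)
  also have "\<dots> = L2"
    using r0 r1 sq M00 by (simp add: x0_def x1_def algebra_simps)
  finally show ?thesis .
qed


lemma key1:
  fixes G II Qr Qt s :: "nat \<Rightarrow> nat \<Rightarrow> real" and c :: "nat \<Rightarrow> nat \<Rightarrow> nat \<Rightarrow> real"
    and bt d :: "nat \<Rightarrow> real" and L m Dv :: real
  assumes isym: "inv2 G 0 1 = inv2 G 1 0" and L: "L \<noteq> 0"
    and csym: "\<And>C. c C 0 1 = c C 1 0"
    and II: "\<And>A B. A < 2 \<Longrightarrow> B < 2 \<Longrightarrow> II A B = (1 / (2 * L)) *
        ((Qr A B + m * Qt A B + bt A * d B + bt B * d A) - (d A * bt B + m * s A B) - (d B * bt A + m * s B A)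
         - (\<Sum>C<2. raise2 G (\<lambda>D. m * bt D) C * (c C A B - c A C B - c B A C)))"
    and Dv: "Dv = (\<Sum>A<2. \<Sum>B<2. inv2 G A B *
        (s A B - (\<Sum>C<2. \<Sum>D<2. inv2 G C D * ((c A B D + c B A D - c D A B) / 2) * bt C)))"
  shows "tr2 G II / L = 1 / (2 * L\<^sup>2) * (tr2 G Qr + m * tr2 G Qt - 2 * m * Dv)"
proof -
  define K where "K A B = ((Qr A B + m * Qt A B + bt A * d B + bt B * d A) - (d A * bt B + m * s A B) - (d B * bt A + m * s B A)
         - (\<Sum>C<2. raise2 G (\<lambda>D. m * bt D) C * (c C A B - c A C B - c B A C)))" for A B
  have c1: "c 0 (Suc 0) 0 = c 0 0 (Suc 0)" "c (Suc 0) (Suc 0) 0 = c (Suc 0) 0 (Suc 0)"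
    using csym[of 0] csym[of 1] by simp_all
  have i1: "inv2 G (Suc 0) 0 = inv2 G 0 (Suc 0)" using isym by simp
  have IIK: "II A B = (1 / (2 * L)) * K A B" if "A < 2" "B < 2" for A B
    using II[OF that] by (simp add: K_def)
  have T: "tr2 G II = (1 / (2 * L)) * tr2 G K"
    unfolding tr2_def using IIK[of 0 0] IIK[of 0 1] IIK[of 1 0] IIK[of 1 1]
    by (simp add: sum2 algebra_simps)
  have P: "tr2 G K = tr2 G Qr + m * tr2 G Qt - 2 * m * Dv"
    unfolding tr2_def Dv K_def
    by (simp add: sum2 raise2_def One_nat_def c1 i1 field_simps)
  show ?thesis using L unfolding T P by (simp add: field_simps power2_eq_square)
qed

lemma key2:
  fixes X H L L2 lam TQr TQt Dv bn m al sq :: real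
  assumes p1: "X = 1 / (2 * L2) * (TQr + m * TQt - 2 * m * Dv)"
    and L2: "L2 > 0" and L: "L = sqrt L2"
    and X: "X = H / L"
    and tm: "Dv + H * bn - TQt / 2 = 0"
    and bn: "bn = - (m * (al + sq)) / L"
    and lam: "lam\<^sup>2 = L2 + (al + sq) * m\<^sup>2" and lam0: "lam \<noteq> 0"
  shows "X = 1 / (2 * lam\<^sup>2) * TQr"
proof -
  have Lp: "L > 0" using L L2 by simp
  have LL: "L * L = L2" using L L2 by simp
  have H: "H = X * L" using X Lp by simp
  have "TQt - 2 * Dv = 2 * H * bn" using tm by simp
  also have "\<dots> = 2 * X * (L * (- (m * (al + sq)) / L))" using H bn by (simp add: algebra_simps)
  also have "\<dots> = - 2 * X * m * (al + sq)" using Lp by simp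
  finally have t: "TQt - 2 * Dv = - 2 * X * m * (al + sq)" .
  have e1: "X * (2 * L2) = TQr + m * (TQt - 2 * Dv)" using p1 L2 by (simp add: field_simps)
  have "X * (2 * lam\<^sup>2) = TQr" using e1 t lam by algebra
  moreover have "lam\<^sup>2 > 0" using lam0 by simp
  ultimately show ?thesis by (simp add: field_simps)
qed

lemma diff_inv2:
  fixes G :: "nat \<Rightarrow> nat \<Rightarrow> 'a::real_normed_vector \<Rightarrow> real"
  assumes G: "\<And>A B. A < 2 \<Longrightarrow> B < 2 \<Longrightarrow> G A B differentiable at x"
    and det: "det2 (\<lambda>A B. G A B x) \<noteq> 0" and A: "A < 2" and B: "B < 2"
  shows "(\<lambda>x. inv2 (\<lambda>A B. G A B x) A B) differentiable at x"
proof -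
  have g: "G 0 0 differentiable at x" "G 0 1 differentiable at x" "G 1 0 differentiable at x" "G 1 1 differentiable at x"
    using G by auto
  have dd: "(\<lambda>x. det2 (\<lambda>A B. G A B x)) differentiable at x"
    unfolding det2_def using g by (intro derivative_intros) auto
  have "A = 0 \<or> A = 1" "B = 0 \<or> B = 1" using A B by auto
  then show ?thesis unfolding inv2_def using g dd det
    by (auto intro!: derivative_intros)
qed

lemma diff_sqn2:
  fixes G :: "nat \<Rightarrow> nat \<Rightarrow> 'a::real_normed_vector \<Rightarrow> real"
  assumes G: "\<And>A B. A < 2 \<Longrightarrow> B < 2 \<Longrightarrow> G A B differentiable at x"
    and w: "\<And>A. A < 2 \<Longrightarrow> w A differentiable at x"
    and det: "det2 (\<lambda>A B. G A B x) \<noteq> 0"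
  shows "(\<lambda>x. sqn2 (\<lambda>A B. G A B x) (\<lambda>A. w A x)) differentiable at x"
  unfolding sqn2_def
  by (intro differentiable_sum ballI finite_lessThan differentiable_mult diff_inv2[OF G det] w) auto

lemma diff_raise2:
  fixes G :: "nat \<Rightarrow> nat \<Rightarrow> 'a::real_normed_vector \<Rightarrow> real"
  assumes G: "\<And>A B. A < 2 \<Longrightarrow> B < 2 \<Longrightarrow> G A B differentiable at x"
    and w: "\<And>A. A < 2 \<Longrightarrow> w A differentiable at x"
    and det: "det2 (\<lambda>A B. G A B x) \<noteq> 0" and C: "C < 2"
  shows "(\<lambda>x. raise2 (\<lambda>A B. G A B x) (\<lambda>A. w A x) C) differentiable at x"
  unfolding raise2_def
  by (intro differentiable_sum ballI finite_lessThan differentiable_mult diff_inv2[OF G det] w C) auto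

lemma M_dom_eq: "M_dom r0 U = {r0<..} \<times> U"
  by (auto simp: M_dom_def)

lemma ST_eq: "spacetime_dom T r0 U = {T<..} \<times> ({r0<..} \<times> U)"
  by (auto simp: spacetime_dom_def)

lemma smooth_D4:
  assumes "open S" "smooth_on_set (unc4 X) S" "(t,r,y,z) \<in> S"
  shows "D4 X t r y z"
proof -
  have "Ck_on 1 (unc4 X) S" using assms(2) unfolding smooth_on_set_def by blast
  then have "unc4 X differentiable_on S" by simp
  then show ?thesis using assms(1,3) differentiable_on_eq_differentiable_at by (auto simp: D4_def)
qed

locale mt7 =
  fixes T r0 :: real and U :: "(real \<times> real) set"
    and Nn lam :: sfield and bT :: "nat \<Rightarrow> sfield" and gam :: "nat \<Rightarrow> nat \<Rightarrow> sfield"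
    and f :: mfield
  assumes U_open: "open U"
    and Nn_smooth: "smooth_on_set (unc4 Nn) (spacetime_dom T r0 U)"
    and lam_smooth: "smooth_on_set (unc4 lam) (spacetime_dom T r0 U)"
    and bT_smooth: "\<forall>A<2. smooth_on_set (unc4 (bT A)) (spacetime_dom T r0 U)"
    and gam_smooth: "\<forall>A<2. \<forall>B<2. smooth_on_set (unc4 (gam A B)) (spacetime_dom T r0 U)"
    and gam_sym: "\<forall>A<2. \<forall>B<2. gam A B = gam B A"
    and gam_pos: "\<forall>(t, r, y, z)\<in>spacetime_dom T r0 U. posdef2 (\<lambda>A B. gam A B t r y z)"
    and lam_pos: "\<forall>(t, r, y, z)\<in>spacetime_dom T r0 U. lam t r y z > 0"
    and f_C2: "Ck_on 2 (unc3 f) (M_dom r0 U)"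
    and f_range: "\<forall>(r, y, z)\<in>M_dom r0 U. T < f r y z"
    and gf_riem: "\<forall>(r, y, z)\<in>M_dom r0 U. posdef3 (\<lambda>i j. gf Nn lam bT gam f i j r y z)"
begin

lemma openM: "open (M_dom r0 U)"
  unfolding M_dom_eq using U_open by (intro open_Times) auto

lemma openST: "open (spacetime_dom T r0 U)"
  unfolding ST_eq using U_open by (intro open_Times) auto

lemma qST: "(r,y,z) \<in> M_dom r0 U \<Longrightarrow> (f r y z, r, y, z) \<in> spacetime_dom T r0 U"
  using f_range by (auto simp: M_dom_def spacetime_dom_def)

lemma D4_base:
  assumes p: "(r,y,z) \<in> M_dom r0 U"
  shows "D4 Nn (f r y z) r y z" "D4 lam (f r y z) r y z"
    "\<And>A. A < 2 \<Longrightarrow> D4 (bT A) (f r y z) r y z"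
    "\<And>A B. A < 2 \<Longrightarrow> B < 2 \<Longrightarrow> D4 (gam A B) (f r y z) r y z"
  using smooth_D4[OF openST _ qST[OF p]] Nn_smooth lam_smooth bT_smooth gam_smooth by auto

lemma gam_det:
  assumes q: "(t,r,y,z) \<in> spacetime_dom T r0 U"
  shows "det2 (\<lambda>A B. gam A B t r y z) > 0"
proof -
  have "gam 0 1 = gam 1 0" using gam_sym by auto
  moreover have "posdef2 (\<lambda>A B. gam A B t r y z)" using gam_pos q by auto
  ultimately show ?thesis by (intro posdef2_det) auto
qed

lemma unc4_alpha: "unc4 (alpha Nn bT gam) = (\<lambda>x. (unc4 Nn x)\<^sup>2 - sqn2 (\<lambda>A B. unc4 (gam A B) x) (\<lambda>A. unc4 (bT A) x))"
  by (auto simp: unc4_def alpha_def)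

lemma D4_alpha:
  assumes p: "(r,y,z) \<in> M_dom r0 U"
  shows "D4 (alpha Nn bT gam) (f r y z) r y z"
proof -
  have "(\<lambda>x. sqn2 (\<lambda>A B. unc4 (gam A B) x) (\<lambda>A. unc4 (bT A) x)) differentiable at (f r y z, r, y, z)"
    apply (rule diff_sqn2)
    using D4_base[OF p] gam_det[OF qST[OF p]] by (auto simp: D4_def unc4_def)
  moreover have "unc4 Nn differentiable at (f r y z, r, y, z)" using D4_base[OF p] by (simp add: D4_def)
  ultimately show ?thesis unfolding D4_def unc4_alpha by (intro derivative_intros) auto
qed

lemma Dp_f:
  assumes p: "(r,y,z) \<in> M_dom r0 U"
  shows "Dp f r y z" "Dp (mr f) r y z" "\<And>A. A < 2 \<Longrightarrow> Dp (mS A f) r y z"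
proof -
  show "Dp f r y z" using Ck2_facts(1)[OF openM f_C2, of 0 0] p by (simp add: Dp_def)
  show "Dp (mr f) r y z" using Ck2_facts(2)[OF openM f_C2, of 0 0] p by (simp add: Dp_def m3_simps)
  fix A :: nat assume "A < 2"
  then show "Dp (mS A f) r y z" using Ck2_facts(2)[OF openM f_C2, of "Suc A" 0] p by (simp add: Dp_def m3_simps)
qed

lemma schwarz_f:
  assumes p: "(r,y,z) \<in> M_dom r0 U" and A: "A < 2"
  shows "mr (mS A f) r y z = mS A (mr f) r y z"
  using schwarz[OF openM f_C2 p A] by simp

lemma Dp_atfX:
  assumes p: "(r,y,z) \<in> M_dom r0 U"
  shows "Dp (atf f Nn) r y z" "Dp (atf f lam) r y z" "Dp (atf f (alpha Nn bT gam)) r y z"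
    "\<And>A. A < 2 \<Longrightarrow> Dp (atf f (bT A)) r y z"
    "\<And>A B. A < 2 \<Longrightarrow> B < 2 \<Longrightarrow> Dp (atf f (gam A B)) r y z"
  using Dp_atf[OF _ Dp_f(1)[OF p]] D4_base[OF p] D4_alpha[OF p] by auto


lemma gf_simps:
  "gf Nn lam bT gam f 0 (Suc B) = bf Nn bT gam f B"
  "gf Nn lam bT gam f (Suc A) 0 = bf Nn bT gam f A"
  "gf Nn lam bT gam f (Suc A) (Suc B) = gamf Nn bT gam f A B"
  by (auto simp: gf_def fun_eq_iff)

lemma nf_simps:
  "nf Nn lam bT gam f 0 = (\<lambda>r y z. 1 / lamf Nn lam bT gam f r y z)"
  "nf Nn lam bT gam f (Suc C) = (\<lambda>r y z. - raise2 (gamfp Nn bT gam f r y z) (\<lambda>A. bf Nn bT gam f A r y z) C / lamf Nn lam bT gam f r y z)"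
  by (auto simp: nf_def fun_eq_iff)

lemma gamf_sym: "A < 2 \<Longrightarrow> B < 2 \<Longrightarrow> gamf Nn bT gam f A B = gamf Nn bT gam f B A"
  using gam_sym by (auto simp: gamf_def atf_def fun_eq_iff algebra_simps)

lemma gamfp_sym: "gamfp Nn bT gam f r y z 0 1 = gamfp Nn bT gam f r y z 1 0"
  using gamf_sym[of 0 1] by (simp add: gamfp_def)

lemma gamf_det:
  assumes p: "(r,y,z) \<in> M_dom r0 U"
  shows "det2 (gamfp Nn bT gam f r y z) > 0"
proof -
  have pd3: "posdef3 (\<lambda>i j. gf Nn lam bT gam f i j r y z)" using gf_riem p by auto
  have "posdef2 (gamfp Nn bT gam f r y z)"
    unfolding posdef2_def
  proof (intro allI impI)
    fix v :: "nat \<Rightarrow> real" assume v: "v 0 \<noteq> 0 \<or> v 1 \<noteq> 0"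
    define w where "w i = (if i = 0 then 0 else v (i - 1))" for i :: nat
    have "\<exists>i<3. w i \<noteq> 0"
    proof (cases "v 0 = 0")
      case True
      then show ?thesis using v by (intro exI[of _ 2]) (simp add: w_def)
    next
      case False
      then show ?thesis by (intro exI[of _ 1]) (simp add: w_def)
    qed
    then have "(\<Sum>i<3. \<Sum>j<3. gf Nn lam bT gam f i j r y z * w i * w j) > 0"
      using pd3 unfolding posdef3_def by blast
    then show "(\<Sum>A<2. \<Sum>B<2. gamfp Nn bT gam f r y z A B * v A * v B) > 0"
      by (simp add: sum3 sum2 w_def numeral_2_eq_2 One_nat_def gf_simps gamfp_def)
  qed
  then show ?thesis by (rule posdef2_det[OF gamfp_sym])
qed

lemma lamf2_pos:
  assumes p: "(r,y,z) \<in> M_dom r0 U"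
  shows "lamf2 Nn lam bT gam f r y z > 0"
proof -
  let ?G = "gamfp Nn bT gam f r y z" and ?b = "\<lambda>A. bf Nn bT gam f A r y z"
  have pd3: "posdef3 (\<lambda>i j. gf Nn lam bT gam f i j r y z)" using gf_riem p by auto
  define v where "v i = (if i = 0 then 1 else - raise2 ?G ?b (i - 1))" for i :: nat
  have "\<exists>i<3. v i \<noteq> 0" by (auto simp: v_def intro: exI[of _ 0])
  then have "(\<Sum>i<3. \<Sum>j<3. gf Nn lam bT gam f i j r y z * v i * v j) > 0"
    using pd3 unfolding posdef3_def by blast
  moreover have "(\<Sum>i<3. \<Sum>j<3. gf Nn lam bT gam f i j r y z * v i * v j) = lamf2 Nn lam bT gam f r y z"
    unfolding v_def
    by (rule quad_form[OF gamfp_sym]) (use gamf_det[OF p] in \<open>auto simp: gf_def gamfp_def\<close>)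
  ultimately show ?thesis by simp
qed

lemma Dp_sqn2:
  assumes G: "\<And>A B. A < 2 \<Longrightarrow> B < 2 \<Longrightarrow> Dp (G A B) r y z"
    and w: "\<And>A. A < 2 \<Longrightarrow> Dp (w A) r y z"
    and det: "det2 (\<lambda>A B. G A B r y z) \<noteq> 0"
  shows "Dp (\<lambda>r y z. sqn2 (\<lambda>A B. G A B r y z) (\<lambda>A. w A r y z)) r y z"
proof -
  have e: "unc3 (\<lambda>r y z. sqn2 (\<lambda>A B. G A B r y z) (\<lambda>A. w A r y z)) = (\<lambda>x. sqn2 (\<lambda>A B. unc3 (G A B) x) (\<lambda>A. unc3 (w A) x))"
    by (auto simp: unc3_def)
  show ?thesis unfolding Dp_def e
    by (rule diff_sqn2) (use G w det in \<open>auto simp: Dp_def unc3_def\<close>)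
qed

lemma Dp_raise2:
  assumes G: "\<And>A B. A < 2 \<Longrightarrow> B < 2 \<Longrightarrow> Dp (G A B) r y z"
    and w: "\<And>A. A < 2 \<Longrightarrow> Dp (w A) r y z"
    and det: "det2 (\<lambda>A B. G A B r y z) \<noteq> 0" and C: "C < 2"
  shows "Dp (\<lambda>r y z. raise2 (\<lambda>A B. G A B r y z) (\<lambda>A. w A r y z) C) r y z"
proof -
  have e: "unc3 (\<lambda>r y z. raise2 (\<lambda>A B. G A B r y z) (\<lambda>A. w A r y z) C) = (\<lambda>x. raise2 (\<lambda>A B. unc3 (G A B) x) (\<lambda>A. unc3 (w A) x) C)"
    by (auto simp: unc3_def)
  show ?thesis unfolding Dp_def e
    by (rule diff_raise2) (use G w det C in \<open>auto simp: Dp_def unc3_def\<close>)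
qed

end

context mt7
begin

lemma Dp_fields:
  assumes p: "(r,y,z) \<in> M_dom r0 U"
  shows "\<And>A B. A < 2 \<Longrightarrow> B < 2 \<Longrightarrow> Dp (gamf Nn bT gam f A B) r y z"
    and "\<And>A. A < 2 \<Longrightarrow> Dp (betafT Nn bT gam f A) r y z"
    and "\<And>A. A < 2 \<Longrightarrow> Dp (bf Nn bT gam f A) r y z"
    and "Dp (lamf2 Nn lam bT gam f) r y z"
    and "Dp (lamf Nn lam bT gam f) r y z"
    and "\<And>k. k < 3 \<Longrightarrow> Dp (nf Nn lam bT gam f k) r y z"
proof -
  note b = Dp_atfX[OF p] Dp_f[OF p]
  show g: "\<And>A B. A < 2 \<Longrightarrow> B < 2 \<Longrightarrow> Dp (gamf Nn bT gam f A B) r y z"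
    unfolding gamf_def by (intro Dp_add Dp_diff Dp_mult b) auto
  show be: "\<And>A. A < 2 \<Longrightarrow> Dp (betafT Nn bT gam f A) r y z"
    unfolding betafT_def by (intro Dp_add Dp_diff Dp_mult b) auto
  show bff: "\<And>A. A < 2 \<Longrightarrow> Dp (bf Nn bT gam f A) r y z"
    unfolding bf_def by (intro Dp_mult b be) auto
  have det: "det2 (\<lambda>A B. gamf Nn bT gam f A B r y z) \<noteq> 0"
    using gamf_det[OF p] by (simp add: gamfp_def)
  have sq: "Dp (\<lambda>r y z. sqn2 (gamfp Nn bT gam f r y z) (\<lambda>A. betafT Nn bT gam f A r y z)) r y z"
  proof -
    have "Dp (\<lambda>r y z. sqn2 (\<lambda>A B. gamf Nn bT gam f A B r y z) (\<lambda>A. betafT Nn bT gam f A r y z)) r y z"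
      apply (rule Dp_sqn2)
        apply (rule g; assumption)
       apply (rule be; assumption)
      apply (rule det)
      done
    then show ?thesis by (simp add: gamfp_def)
  qed
  show l2: "Dp (lamf2 Nn lam bT gam f) r y z"
    unfolding lamf2_def by (intro Dp_add Dp_diff Dp_mult Dp_pow b sq)
  show l: "Dp (lamf Nn lam bT gam f) r y z"
    unfolding lamf_def by (intro Dp_sqrt l2 lamf2_pos[OF p])
  have l0: "lamf Nn lam bT gam f r y z \<noteq> 0" using lamf2_pos[OF p] by (simp add: lamf_def)
  fix k :: nat assume k: "k < 3"
  show "Dp (nf Nn lam bT gam f k) r y z"
  proof (cases k)
    case 0
    show ?thesis unfolding \<open>k = 0\<close> nf_simps by (intro Dp_div Dp_const l l0)
  next
    case (Suc C)
    then have C: "C < 2" using k by simp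
    have "Dp (\<lambda>r y z. raise2 (\<lambda>A B. gamf Nn bT gam f A B r y z) (\<lambda>A. bf Nn bT gam f A r y z) C) r y z"
      apply (rule Dp_raise2)
        apply (rule g; assumption)
       apply (rule bff; assumption)
      apply (rule det)
      apply (rule C)
      done
    then have "Dp (\<lambda>r y z. raise2 (gamfp Nn bT gam f r y z) (\<lambda>A. bf Nn bT gam f A r y z) C) r y z"
      by (simp add: gamfp_def)
    then show ?thesis unfolding Suc nf_simps by (intro Dp_div Dp_minus l l0)
  qed
qed

end

context mt7
begin

lemma mr_gamf:
  assumes p: "(r,y,z) \<in> M_dom r0 U" and A: "A < 2" and B: "B < 2"
  shows "mr (gamf Nn bT gam f A B) r y z = Qr Nn bT gam f r y z (dSf f r y z) A B
     + mr f r y z * Qt Nn bT gam f r y z (dSf f r y z) A B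
     + betafT Nn bT gam f A r y z * mS B (mr f) r y z + betafT Nn bT gam f B r y z * mS A (mr f) r y z"
proof -
  note b = Dp_atfX[OF p] Dp_f[OF p] A B
  have D: "Dp (atf f (gam A B)) r y z" "Dp (atf f (bT A)) r y z" "Dp (atf f (bT B)) r y z"
     "Dp (atf f (alpha Nn bT gam)) r y z" "Dp (mS A f) r y z" "Dp (mS B f) r y z"
    using b by auto
  have "mr (gamf Nn bT gam f A B) r y z = m3 0 (gamf Nn bT gam f A B) r y z" by (simp add: m3_simps)
  also have "\<dots> = m3 0 (atf f (gam A B)) r y z + (m3 0 (atf f (bT A)) r y z * mS B f r y z + atf f (bT A) r y z * m3 0 (mS B f) r y z)
      + (m3 0 (atf f (bT B)) r y z * mS A f r y z + atf f (bT B) r y z * m3 0 (mS A f) r y z)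
      - ((m3 0 (atf f (alpha Nn bT gam)) r y z * mS A f r y z + atf f (alpha Nn bT gam) r y z * m3 0 (mS A f) r y z) * mS B f r y z
         + atf f (alpha Nn bT gam) r y z * mS A f r y z * m3 0 (mS B f) r y z)"
    unfolding gamf_def
    by (simp only: m3_diff m3_add m3_mult Dp_add Dp_diff Dp_mult D zero_less_numeral numeral_3_eq_3 zero_less_Suc) 
  also have "\<dots> = Qr Nn bT gam f r y z (dSf f r y z) A B
     + mr f r y z * Qt Nn bT gam f r y z (dSf f r y z) A B
     + betafT Nn bT gam f A r y z * mS B (mr f) r y z + betafT Nn bT gam f B r y z * mS A (mr f) r y z"
    unfolding m3_simps
    using mr_atf[OF D4_base(4)[OF p A B] Dp_f(1)[OF p]] mr_atf[OF D4_base(3)[OF p A] Dp_f(1)[OF p]]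
      mr_atf[OF D4_base(3)[OF p B] Dp_f(1)[OF p]] mr_atf[OF D4_alpha[OF p] Dp_f(1)[OF p]]
      schwarz_f[OF p A] schwarz_f[OF p B]
    by (simp add: Qr_def Qt_def dSf_def betafT_def atf_def algebra_simps)
  finally show ?thesis .
qed

lemma gn_zero:
  assumes B: "B < 2" and x: "x \<in> M_dom r0 U"
  shows "unc3 (\<lambda>r y z. \<Sum>k<3. gf Nn lam bT gam f k (Suc B) r y z * nf Nn lam bT gam f k r y z) x = 0"
proof -
  obtain r y z where xx: "x = (r,y,z)" by (cases x) auto
  let ?G = "gamfp Nn bT gam f r y z" and ?w = "\<lambda>A. bf Nn bT gam f A r y z"
  have det: "det2 ?G \<noteq> 0" using gamf_det x xx by force
  have sym: "?G 0 B = ?G B 0" "?G 1 B = ?G B 1" using gamf_sym[of 0 B] gamf_sym[of 1 B] B by (auto simp: gamfp_def)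
  have "(\<Sum>k<3. gf Nn lam bT gam f k (Suc B) r y z * nf Nn lam bT gam f k r y z)
      = (?w B - (\<Sum>C<2. ?G C B * raise2 ?G ?w C)) / lamf Nn lam bT gam f r y z"
    by (simp add: sum3 sum2 numeral_2_eq_2 gf_simps nf_simps gamfp_def diff_divide_distrib add_divide_distrib)
  also have "\<dots> = 0" using raise_cancel[OF gamfp_sym det B] by simp
  finally show ?thesis by (simp add: xx unc3_def)
qed


lemma IIf_expr:
  assumes p: "(r,y,z) \<in> M_dom r0 U" and A: "A < 2" and B: "B < 2"
  shows "IIf Nn lam bT gam f A B r y z = (1 / (2 * lamf Nn lam bT gam f r y z)) *
     (mr (gamf Nn bT gam f A B) r y z - mS A (bf Nn bT gam f B) r y z - mS B (bf Nn bT gam f A) r y z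
      - (\<Sum>C<2. raise2 (gamfp Nn bT gam f r y z) (\<lambda>D. bf Nn bT gam f D r y z) C *
          (mS C (gamf Nn bT gam f A B) r y z - mS A (gamf Nn bT gam f C B) r y z - mS B (gamf Nn bT gam f A C) r y z)))"
proof -
  let ?g = "\<lambda>k. gf Nn lam bT gam f k (Suc B)" and ?n = "nf Nn lam bT gam f"
  let ?L = "lamf Nn lam bT gam f r y z"
  have l0: "?L \<noteq> 0" using lamf2_pos[OF p] by (simp add: lamf_def)
  have Dg: "Dp (?g k) r y z" if "k < 3" for k
  proof (cases k)
    case 0 then show ?thesis using Dp_fields(3)[OF p B] by (simp add: gf_simps)
  next
    case (Suc C) then show ?thesis using Dp_fields(1)[OF p, of C B] that B by (simp add: gf_simps)
  qed
  have Dn: "Dp (?n k) r y z" if "k < 3" for k using Dp_fields(6)[OF p that] .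
  have A1: "Suc A < 3" using A by simp
  have "m3 (Suc A) (\<lambda>r y z. \<Sum>k<3. ?g k r y z * ?n k r y z) r y z = 0"
    by (rule m3_zero_near[OF openM p gn_zero[OF B] A1])
  moreover have "m3 (Suc A) (\<lambda>r y z. \<Sum>k<3. ?g k r y z * ?n k r y z) r y z
      = (\<Sum>k<3. m3 (Suc A) (\<lambda>r y z. ?g k r y z * ?n k r y z) r y z)"
    by (rule m3_sum) (use Dg Dn A1 in \<open>auto intro: Dp_mult\<close>)
  moreover have "(\<Sum>k<3. m3 (Suc A) (\<lambda>r y z. ?g k r y z * ?n k r y z) r y z)
      = (\<Sum>k<3. m3 (Suc A) (?g k) r y z * ?n k r y z + ?g k r y z * m3 (Suc A) (?n k) r y z)"
    by (rule sum.cong[OF refl]) (use Dg Dn A1 m3_mult in auto)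
  ultimately have S1: "(\<Sum>k<3. ?g k r y z * m3 (Suc A) (?n k) r y z) = - (\<Sum>k<3. m3 (Suc A) (?g k) r y z * ?n k r y z)"
    by (simp add: sum.distrib eq_neg_iff_add_eq_0)
  have "IIf Nn lam bT gam f A B r y z = (\<Sum>k<3. ?g k r y z * m3 (Suc A) (?n k) r y z)
      + (\<Sum>j<3. Chr3 (gf Nn lam bT gam f) (Suc B) (Suc A) j r y z * ?n j r y z)"
    by (simp add: IIf_def)
  also have "\<dots> = (\<Sum>j<3. (Chr3 (gf Nn lam bT gam f) (Suc B) (Suc A) j r y z - m3 (Suc A) (?g j) r y z) * ?n j r y z)"
    unfolding S1 by (simp add: sum_subtractf left_diff_distrib)
  also have "\<dots> = (1 / (2 * ?L)) *
     (mr (gamf Nn bT gam f A B) r y z - mS A (bf Nn bT gam f B) r y z - mS B (bf Nn bT gam f A) r y z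
      - (\<Sum>C<2. raise2 (gamfp Nn bT gam f r y z) (\<lambda>D. bf Nn bT gam f D r y z) C *
          (mS C (gamf Nn bT gam f A B) r y z - mS A (gamf Nn bT gam f C B) r y z - mS B (gamf Nn bT gam f A C) r y z)))"
    using l0
    by (simp add: sum3 sum2 numeral_2_eq_2 One_nat_def Chr3_def gf_simps nf_simps m3_simps field_simps)
  finally show ?thesis .
qed

end

context mt7
begin

lemma part1:
  assumes p: "(r,y,z) \<in> M_dom r0 U"
  shows "Hf Nn lam bT gam f r y z / lamf Nn lam bT gam f r y z
          = 1 / (2 * lamf2 Nn lam bT gam f r y z) *
             (tr2 (gamfp Nn bT gam f r y z) (Qr Nn bT gam f r y z (dSf f r y z))
              + mr f r y z * tr2 (gamfp Nn bT gam f r y z) (Qt Nn bT gam f r y z (dSf f r y z))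
              - 2 * mr f r y z * div2 (gamf Nn bT gam f) (betafT Nn bT gam f) r y z)"
proof -
  let ?G = "gamfp Nn bT gam f r y z" and ?L = "lamf Nn lam bT gam f r y z"
  have l0: "?L \<noteq> 0" using lamf2_pos[OF p] by (simp add: lamf_def)
  have LL: "?L\<^sup>2 = lamf2 Nn lam bT gam f r y z" using lamf2_pos[OF p] by (simp add: lamf_def)
  have mSbf: "mS A' (bf Nn bT gam f B') r y z = mS A' (mr f) r y z * betafT Nn bT gam f B' r y z
        + mr f r y z * mS A' (betafT Nn bT gam f B') r y z" if "A' < 2" "B' < 2" for A' B'
    using m3_mult[OF Dp_f(2)[OF p] Dp_fields(2)[OF p that(2)], of "Suc A'"] that
    by (simp add: bf_def m3_simps)
  have rb: "(\<lambda>D. bf Nn bT gam f D r y z) = (\<lambda>D. mr f r y z * betafT Nn bT gam f D r y z)"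
    by (simp add: bf_def)
  have "tr2 ?G (\<lambda>A B. IIf Nn lam bT gam f A B r y z) / ?L = 1 / (2 * ?L\<^sup>2) *
     (tr2 ?G (Qr Nn bT gam f r y z (dSf f r y z)) + mr f r y z * tr2 ?G (Qt Nn bT gam f r y z (dSf f r y z))
      - 2 * mr f r y z * div2 (gamf Nn bT gam f) (betafT Nn bT gam f) r y z)"
  proof (rule key1[where s = "\<lambda>A B. mS A (betafT Nn bT gam f B) r y z"
        and c = "\<lambda>C A B. mS C (gamf Nn bT gam f A B) r y z"
        and bt = "\<lambda>A. betafT Nn bT gam f A r y z" and d = "\<lambda>A. mS A (mr f) r y z"])
    show "inv2 ?G 0 1 = inv2 ?G 1 0" by (rule inv_sym[OF gamfp_sym])
    show "?L \<noteq> 0" by (rule l0)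
    show "\<And>C. mS C (gamf Nn bT gam f 0 1) r y z = mS C (gamf Nn bT gam f 1 0) r y z"
      using gamf_sym[of 0 1] by simp
    show "div2 (gamf Nn bT gam f) (betafT Nn bT gam f) r y z =
      (\<Sum>A<2. \<Sum>B<2. inv2 ?G A B * (mS A (betafT Nn bT gam f B) r y z -
        (\<Sum>C<2. \<Sum>D<2. inv2 ?G C D * ((mS A (gamf Nn bT gam f B D) r y z + mS B (gamf Nn bT gam f A D) r y z
           - mS D (gamf Nn bT gam f A B) r y z) / 2) * betafT Nn bT gam f C r y z)))"
      by (simp add: div2_def Chr2_def Let_def gamfp_def)
    fix A B :: nat assume A: "A < 2" and B: "B < 2"
    show "IIf Nn lam bT gam f A B r y z = 1 / (2 * ?L) *
        (Qr Nn bT gam f r y z (dSf f r y z) A B + mr f r y z * Qt Nn bT gam f r y z (dSf f r y z) A B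
          + betafT Nn bT gam f A r y z * mS B (mr f) r y z + betafT Nn bT gam f B r y z * mS A (mr f) r y z
         - (mS A (mr f) r y z * betafT Nn bT gam f B r y z + mr f r y z * mS A (betafT Nn bT gam f B) r y z)
         - (mS B (mr f) r y z * betafT Nn bT gam f A r y z + mr f r y z * mS B (betafT Nn bT gam f A) r y z)
         - (\<Sum>C<2. raise2 ?G (\<lambda>D. mr f r y z * betafT Nn bT gam f D r y z) C *
             (mS C (gamf Nn bT gam f A B) r y z - mS A (gamf Nn bT gam f C B) r y z - mS B (gamf Nn bT gam f A C) r y z)))"
      unfolding IIf_expr[OF p A B] mr_gamf[OF p A B] mSbf[OF A B] mSbf[OF B A] rb by simp
  qed
  then show ?thesis by (simp add: Hf_def LL)
qed

lemma dtgam: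
  assumes p: "(r,y,z) \<in> M_dom r0 U" and A: "A < 2" and B: "B < 2"
  shows "dtgamf Nn bT gam f A B r y z = Qt Nn bT gam f r y z (dSf f r y z) A B"
proof -
  have h1: "((\<lambda>s. gam A B s r y z) has_real_derivative pt (gam A B) (f r y z) r y z) (at (f r y z))"
    by (rule pt_hasD[OF D4_base(4)[OF p A B]])
  have h2: "((\<lambda>s. bT A s r y z) has_real_derivative pt (bT A) (f r y z) r y z) (at (f r y z))"
    by (rule pt_hasD[OF D4_base(3)[OF p A]])
  have h3: "((\<lambda>s. bT B s r y z) has_real_derivative pt (bT B) (f r y z) r y z) (at (f r y z))"
    by (rule pt_hasD[OF D4_base(3)[OF p B]])
  have h4: "((\<lambda>s. alpha Nn bT gam s r y z) has_real_derivative pt (alpha Nn bT gam) (f r y z) r y z) (at (f r y z))"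
    by (rule pt_hasD[OF D4_alpha[OF p]])
  have "((\<lambda>s. gam A B s r y z + bT A s r y z * mS B f r y z + bT B s r y z * mS A f r y z
      - alpha Nn bT gam s r y z * mS A f r y z * mS B f r y z) has_real_derivative
      (pt (gam A B) (f r y z) r y z + pt (bT A) (f r y z) r y z * mS B f r y z + pt (bT B) (f r y z) r y z * mS A f r y z
      - pt (alpha Nn bT gam) (f r y z) r y z * mS A f r y z * mS B f r y z)) (at (f r y z))"
    by (rule DERIV_diff[OF DERIV_add[OF DERIV_add[OF h1 DERIV_cmult_right[OF h2]] DERIV_cmult_right[OF h3]]
          DERIV_cmult_right[OF DERIV_cmult_right[OF h4]]])
  from DERIV_imp_deriv[OF this] show ?thesis
    by (simp add: dtgamf_def Qt_def atf_def dSf_def)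
qed

lemma part2:
  assumes p: "(r,y,z) \<in> M_dom r0 U" and tm: "TMCF_at Nn lam bT gam f r y z"
  shows "Hf Nn lam bT gam f r y z / lamf Nn lam bT gam f r y z
          = 1 / (2 * (atf f lam r y z)^2) *
             tr2 (gamfp Nn bT gam f r y z) (Qr Nn bT gam f r y z (dSf f r y z))"
proof -
  let ?G = "gamfp Nn bT gam f r y z" and ?L = "lamf Nn lam bT gam f r y z"
  have tq: "tr2 ?G (\<lambda>A B. dtgamf Nn bT gam f A B r y z) = tr2 ?G (Qt Nn bT gam f r y z (dSf f r y z))"
    unfolding tr2_def by (intro sum.cong refl) (simp add: dtgam[OF p])
  have lp: "atf f lam r y z > 0" using lam_pos qST[OF p] by (auto simp: atf_def)
  show ?thesis
  proof (rule key2[OF part1[OF p]])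
    show "lamf2 Nn lam bT gam f r y z > 0" by (rule lamf2_pos[OF p])
    show "?L = sqrt (lamf2 Nn lam bT gam f r y z)" by (simp add: lamf_def)
    show "Hf Nn lam bT gam f r y z / ?L = Hf Nn lam bT gam f r y z / ?L" ..
    show "div2 (gamf Nn bT gam f) (betafT Nn bT gam f) r y z + Hf Nn lam bT gam f r y z * betaf_n Nn lam bT gam f r y z
        - tr2 ?G (Qt Nn bT gam f r y z (dSf f r y z)) / 2 = 0"
      using tm unfolding TMCF_at_def tq .
    show "betaf_n Nn lam bT gam f r y z = - (mr f r y z * (atf f (alpha Nn bT gam) r y z + sqn2 ?G (\<lambda>A. betafT Nn bT gam f A r y z))) / ?L"
      by (simp add: betaf_n_def nf_simps sum2 raise2_def sqn2_def bf_def diff_divide_distrib add_divide_distrib algebra_simps)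
    show "(atf f lam r y z)\<^sup>2 = lamf2 Nn lam bT gam f r y z + (atf f (alpha Nn bT gam) r y z + sqn2 ?G (\<lambda>A. betafT Nn bT gam f A r y z)) * (mr f r y z)\<^sup>2"
      by (simp add: lamf2_def)
    show "atf f lam r y z \<noteq> 0" using lp by simp
  qed
qed

end

theorem mainTheorem7:
  fixes T r0 :: real and U :: "(real \<times> real) set"
    and Nn lam :: sfield and bT :: "nat \<Rightarrow> sfield" and gam :: "nat \<Rightarrow> nat \<Rightarrow> sfield"
    and f :: mfield
  assumes U_open: "open U"
    and Nn_smooth: "smooth_on_set (unc4 Nn) (spacetime_dom T r0 U)"
    and lam_smooth: "smooth_on_set (unc4 lam) (spacetime_dom T r0 U)"
    and bT_smooth: "\<forall>A<2. smooth_on_set (unc4 (bT A)) (spacetime_dom T r0 U)"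
    and gam_smooth: "\<forall>A<2. \<forall>B<2. smooth_on_set (unc4 (gam A B)) (spacetime_dom T r0 U)"
    and gam_sym: "\<forall>A<2. \<forall>B<2. gam A B = gam B A"
    and gam_pos: "\<forall>(t, r, y, z)\<in>spacetime_dom T r0 U. posdef2 (\<lambda>A B. gam A B t r y z)"
    and lam_pos: "\<forall>(t, r, y, z)\<in>spacetime_dom T r0 U. lam t r y z > 0"
    and f_C2: "Ck_on 2 (unc3 f) (M_dom r0 U)"
    and f_range: "\<forall>(r, y, z)\<in>M_dom r0 U. T < f r y z"
    and gf_riem: "\<forall>(r, y, z)\<in>M_dom r0 U. posdef3 (\<lambda>i j. gf Nn lam bT gam f i j r y z)"
  shows "(\<forall>(r, y, z)\<in>M_dom r0 U.
            Hf Nn lam bT gam f r y z / lamf Nn lam bT gam f r y z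
          = 1 / (2 * lamf2 Nn lam bT gam f r y z) *
             (tr2 (gamfp Nn bT gam f r y z) (Qr Nn bT gam f r y z (dSf f r y z))
              + mr f r y z * tr2 (gamfp Nn bT gam f r y z) (Qt Nn bT gam f r y z (dSf f r y z))
              - 2 * mr f r y z * div2 (gamf Nn bT gam f) (betafT Nn bT gam f) r y z))
       \<and> ((\<forall>(r, y, z)\<in>M_dom r0 U. TMCF_at Nn lam bT gam f r y z) \<longrightarrow>
          (\<forall>(r, y, z)\<in>M_dom r0 U.
            Hf Nn lam bT gam f r y z / lamf Nn lam bT gam f r y z
          = 1 / (2 * (atf f lam r y z)^2) *
             tr2 (gamfp Nn bT gam f r y z) (Qr Nn bT gam f r y z (dSf f r y z))))"
proof -
  interpret mt7 T r0 U Nn lam bT gam f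
    by (rule mt7.intro) (rule assms)+
  have P1: "\<forall>(r, y, z)\<in>M_dom r0 U.
            Hf Nn lam bT gam f r y z / lamf Nn lam bT gam f r y z
          = 1 / (2 * lamf2 Nn lam bT gam f r y z) *
             (tr2 (gamfp Nn bT gam f r y z) (Qr Nn bT gam f r y z (dSf f r y z))
              + mr f r y z * tr2 (gamfp Nn bT gam f r y z) (Qt Nn bT gam f r y z (dSf f r y z))
              - 2 * mr f r y z * div2 (gamf Nn bT gam f) (betafT Nn bT gam f) r y z)"
    using part1 by auto
  have P2: "(\<forall>(r, y, z)\<in>M_dom r0 U. TMCF_at Nn lam bT gam f r y z) \<longrightarrow>
          (\<forall>(r, y, z)\<in>M_dom r0 U.
            Hf Nn lam bT gam f r y z / lamf Nn lam bT gam f r y z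
          = 1 / (2 * (atf f lam r y z)^2) *
             tr2 (gamfp Nn bT gam f r y z) (Qr Nn bT gam f r y z (dSf f r y z)))"
    using part2 by fastforce
  show ?thesis using P1 P2 by blast
qed

end
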